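(* Let $\mathcal{V},\mathcal{U}$ be finite additive groups, $\mathcal{X},\mathcal{Y}$ nonempty sets, $n,l,m\ge1$. Let $V^n$ be a random variable on $\mathcal{V}^n$ with distribution $P_{V^n}$ (the source), and let $W^m(\cdot|\cdot)$ be a channel, i.e. for each $\mathbf{x}\in\mathcal{X}^m$, $W^m(\cdot|\mathbf{x})$ is a probability mass function on $\mathcal{Y}^m$. Let $F_n:\mathcal{V}^n\to\mathcal{U}^l$ be a random linear code and $q_n:\mathcal{V}^n\times\mathcal{U}^l\to\mathcal{X}^m$ a map, and define the random encoder $$\Phi_n(\mathbf{v})=q_n\big(\mathbf{v},\ \Sigma_l(F_n(\Sigma_n(\mathbf{v})))+\bar U^l\big),$$ with $\Sigma_n,\Sigma_l$ uniformly distributed random coordinate permutations of $\mathcal{V}^n$, $\mathcal{U}^l$, $\bar U^l$ uniform on $\mathcal{U}^l$, and $F_n,\Sigma_n,\Sigma_l,\bar U^l,V^n$ and the channel noise mutually independent. Let $\epsilon_n$ be the error probability $\Pr\{V^n\neq\psi_n(Y)\}$ averaged over the random encoder, where for each realization $\varphi_n$ of $\Phi_n$ the decoder $\psi_n:\mathcal{Y}^m\to\mathcal{V}^n$ is an optimal (error-probability-minimizing) decoder and $Y$ is the channel output for input $\varphi_n(V^n)$. Let $P_{X^m|V^n}(\mathbf{x}|\mathbf{v})=|q_n^{-1}(\mathbf{v},\mathbf{x})|/|\mathcal{U}|^l$ with $q_n^{-1}(\mathbf{v},\mathbf{x})=\{\mathbf{u}\in\mathcal{U}^l:q_n(\mathbf{v},\mathbf{u})=\mathbf{x}\}$,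 and let $(V^n,X^m,Y^m)$ have joint distribution $P_{V^n}(\mathbf{v})P_{X^m|V^n}(\mathbf{x}|\mathbf{v})W^m(\mathbf{y}|\mathbf{x})$, with $P_{Y^m}$ the marginal of $Y^m$. Then for every $\gamma>0$, $$\epsilon_n\le\Pr\Big\{\frac1n\ln\frac{W^m(Y^m|X^m)}{P_{Y^m}(Y^m)}\le\frac1n\ln\frac{1}{P_{V^n}(V^n)}+\frac1n\ln\beta'(F_n,q_n)(V^n,X^m)+\gamma\Big\}+e^{-n\gamma},$$ where $$\beta'(F_n,q_n)(\mathbf{v},\mathbf{x})=\max_{P\in\mathcal{P}_n(\mathcal{V})\setminus\{P_{0^n}\},\ \mathbf{u}_1\in\mathcal{U}^l}\ \sum_{\mathbf{u}_2\in q_n^{-1}(\mathbf{v},\mathbf{x})}\frac{\alpha(F_n)(P,P_{\mathbf{u}_2-\mathbf{u}_1})}{|q_n^{-1}(\mathbf{v},\mathbf{x})|}.$$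
   Context: A random linear code $F:\mathcal{V}^n\to\mathcal{U}^l$ is a random variable taking values in the group homomorphisms $\mathcal{V}^n\to\mathcal{U}^l$. The type $P_{\mathbf{x}}$ of a sequence $\mathbf{x}$ of length $n$ over a finite alphabet $\mathcal{A}$ is $P_{\mathbf{x}}(a)=N(a|\mathbf{x})/n$, $N(a|\mathbf{x})$ the number of occurrences of $a$; $\mathcal{P}_n(\mathcal{A})$ is the set of types of sequences in $\mathcal{A}^n$; $P_{0^n}$ is the type of the all-zero sequence. For a map $f:\mathcal{V}^n\to\mathcal{U}^l$, $S(f)(P,Q)=|\{\mathbf{v}: P_{\mathbf{v}}=P,\ P_{f(\mathbf{v})}=Q\}|/|\mathcal{V}|^n$; for a random linear code $F$, $P\in\mathcal{P}_n(\mathcal{V})$, $Q\in\mathcal{P}_l(\mathcal{U})$, $$\alpha(F)(P,Q)=\frac{E[S(F)(P,Q)]}{\binom{n}{nP}\binom{l}{lQ}|\mathcal{V}|^{-n}|\mathcal{U}|^{-l}},\quad \binom{n}{nP}=\frac{n!}{\prod_a (nP(a))!},\ \binom{l}{lQ}=\frac{l!}{\prod_b (lQ(b))!}.$$ Logarithms are natural, with $\ln 0=-\infty$. *)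

theory Defs
  imports "HOL-Probability.Probability" "HOL-Combinatorics.Permutations"
begin

definition seqs :: "nat \<Rightarrow> 'a list set" where
  "seqs n = {xs. length xs = n}"

definition vadd :: "'a::ab_group_add list \<Rightarrow> 'a list \<Rightarrow> 'a list" where
  "vadd xs ys = map2 (+) xs ys"

definition vsub :: "'a::ab_group_add list \<Rightarrow> 'a list \<Rightarrow> 'a list" where
  "vsub xs ys = map2 (-) xs ys"

text \<open>Group homomorphisms from V^n to U^l (behaviour on other lists irrelevant).\<close>
definition is_linear_map :: "nat \<Rightarrow> nat \<Rightarrow> ('v::ab_group_add list \<Rightarrow> 'u::ab_group_add list) \<Rightarrow> bool" where
  "is_linear_map n l f \<longleftrightarrow> (\<forall>a\<in>seqs n. f a \<in> seqs l) \<and>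
     (\<forall>a\<in>seqs n. \<forall>b\<in>seqs n. f (vadd a b) = vadd (f a) (f b))"

definition random_linear_code :: "nat \<Rightarrow> nat \<Rightarrow> ('v::ab_group_add list \<Rightarrow> 'u::ab_group_add list) pmf \<Rightarrow> bool" where
  "random_linear_code n l F \<longleftrightarrow> (\<forall>f\<in>set_pmf F. is_linear_map n l f)"

definition type_of :: "'a list \<Rightarrow> 'a \<Rightarrow> real" where
  "type_of xs = (\<lambda>a. real (count_list xs a) / real (length xs))"

definition types :: "nat \<Rightarrow> ('a \<Rightarrow> real) set" where
  "types n = type_of ` seqs n"

definition multinom :: "nat \<Rightarrow> ('a::finite \<Rightarrow> real) \<Rightarrow> real" where
  "multinom n P = fact n / (\<Prod>a\<in>UNIV. fact (nat \<lfloor>real n * P a\<rfloor>))"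

definition S_count :: "nat \<Rightarrow> ('v::finite list \<Rightarrow> 'u::finite list) \<Rightarrow> ('v \<Rightarrow> real) \<Rightarrow> ('u \<Rightarrow> real) \<Rightarrow> real" where
  "S_count n f P Q = real (card {v\<in>seqs n. type_of v = P \<and> type_of (f v) = Q}) / real (CARD('v)) ^ n"

definition alpha :: "nat \<Rightarrow> nat \<Rightarrow> ('v::finite list \<Rightarrow> 'u::finite list) pmf \<Rightarrow> ('v \<Rightarrow> real) \<Rightarrow> ('u \<Rightarrow> real) \<Rightarrow> real" where
  "alpha n l F P Q = measure_pmf.expectation F (\<lambda>f. S_count n f P Q) /
     (multinom n P * multinom l Q * real (CARD('v)) powi (- int n) * real (CARD('u)) powi (- int l))"

definition qinv :: "nat \<Rightarrow> ('v list \<Rightarrow> 'u list \<Rightarrow> 'x list) \<Rightarrow> 'v list \<Rightarrow> 'x list \<Rightarrow> 'u list set" where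
  "qinv l q v x = {u\<in>seqs l. q v u = x}"

definition beta' :: "nat \<Rightarrow> nat \<Rightarrow> ('v::{finite,ab_group_add} list \<Rightarrow> 'u::{finite,ab_group_add} list) pmf
     \<Rightarrow> ('v list \<Rightarrow> 'u list \<Rightarrow> 'x list) \<Rightarrow> 'v list \<Rightarrow> 'x list \<Rightarrow> real" where
  "beta' n l F q v x = Max ((\<lambda>(P, u1). \<Sum>u2\<in>qinv l q v x.
        alpha n l F P (type_of (vsub u2 u1)) / real (card (qinv l q v x)))
     ` ((types n - {type_of (replicate n (0::'v))}) \<times> seqs l))"

definition rand_perm :: "nat \<Rightarrow> (nat \<Rightarrow> nat) pmf" where
  "rand_perm n = pmf_of_set {\<sigma>. \<sigma> permutes {..<n}}"

definition rand_encoder :: "nat \<Rightarrow> nat \<Rightarrow> ('v list \<Rightarrow> 'u::{finite,ab_group_add} list) pmf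
     \<Rightarrow> ('v list \<Rightarrow> 'u list \<Rightarrow> 'x list) \<Rightarrow> ('v list \<Rightarrow> 'x list) pmf" where
  "rand_encoder n l F q =
     do { f \<leftarrow> F; s \<leftarrow> rand_perm n; t \<leftarrow> rand_perm l; ub \<leftarrow> pmf_of_set (seqs l);
          return_pmf (\<lambda>v. q v (vadd (permute_list t (f (permute_list s v))) ub)) }"

definition err_prob :: "'v list pmf \<Rightarrow> ('x list \<Rightarrow> 'y list pmf) \<Rightarrow> ('v list \<Rightarrow> 'x list)
     \<Rightarrow> ('y list \<Rightarrow> 'v list) \<Rightarrow> real" where
  "err_prob PV W phi psi =
     measure_pmf.prob (do { v \<leftarrow> PV; y \<leftarrow> W (phi v); return_pmf (v, y) }) {(v, y). v \<noteq> psi y}"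

definition opt_err :: "'v list pmf \<Rightarrow> ('x list \<Rightarrow> 'y list pmf) \<Rightarrow> ('v list \<Rightarrow> 'x list) \<Rightarrow> real" where
  "opt_err PV W phi = (INF psi. err_prob PV W phi psi)"

definition avg_err :: "nat \<Rightarrow> nat \<Rightarrow> 'v list pmf \<Rightarrow> ('x list \<Rightarrow> 'y list pmf)
     \<Rightarrow> ('v list \<Rightarrow> 'u::{finite,ab_group_add} list) pmf \<Rightarrow> ('v list \<Rightarrow> 'u list \<Rightarrow> 'x list) \<Rightarrow> real" where
  "avg_err n l PV W F q = measure_pmf.expectation (rand_encoder n l F q) (opt_err PV W)"

text \<open>Joint distribution P_V(v) P_{X|V}(x|v) W(y|x), with P_{X|V}(x|v) = |q^{-1}(v,x)|/|U|^l
  realised as x = q(v,u) for u uniform on U^l.\<close>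
definition joint_VXY :: "nat \<Rightarrow> 'v list pmf \<Rightarrow> ('x list \<Rightarrow> 'y list pmf)
     \<Rightarrow> ('v list \<Rightarrow> 'u::finite list \<Rightarrow> 'x list) \<Rightarrow> ('v list \<times> 'x list \<times> 'y list) pmf" where
  "joint_VXY l PV W q =
     do { v \<leftarrow> PV; u \<leftarrow> pmf_of_set (seqs l); y \<leftarrow> W (q v u); return_pmf (v, q v u, y) }"

definition eln :: "real \<Rightarrow> ereal" where
  "eln x = (if x > 0 then ereal (ln x) else - \<infinity>)"

end

theory Submission
  imports Defs "HOL-Combinatorics.Multiset_Permutations"
begin
lemma integral_bind_pmf_bounded:
  fixes f :: "'b \<Rightarrow> real"
  assumes "\<And>x. \<bar>f x\<bar> \<le> B"
  shows "measure_pmf.expectation (bind_pmf M N) f =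
         measure_pmf.expectation M (\<lambda>x. measure_pmf.expectation (N x) f)"
  unfolding measure_pmf_bind
  apply (rule integral_bind[where K="count_space UNIV" and B=B and B'=1])
  using assms measurable_measure_pmf[of N]
  by (auto simp: prob_space.finite_measure prob_space_measure_pmf)

lemma expectation_return_pmf: "measure_pmf.expectation (return_pmf x) (f::_\<Rightarrow>real) = f x"
  by (subst integral_measure_pmf_real[of "{x}"]) auto

lemma prob_as_exp: "measure_pmf.prob p A = measure_pmf.expectation p (indicator A)"
  by (simp add: measure_pmf.emeasure_eq_measure)

lemma integrable_pmf_bounded:
  fixes g :: "'a \<Rightarrow> real"
  assumes "\<And>x. \<bar>g x\<bar> \<le> C"
  shows "integrable (measure_pmf p) g"
  by (rule measure_pmf.integrable_const_bound[where B=C]) (use assms in auto)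

lemma err_prob_bounds: "0 \<le> err_prob PV W phi psi" "err_prob PV W phi psi \<le> 1"
  unfolding err_prob_def by auto

lemma opt_err_le_err: "opt_err PV W phi \<le> err_prob PV W phi psi"
proof -
  have bdd: "bdd_below (range (err_prob PV W phi))"
    by (rule bdd_belowI[where m=0]) (auto simp: err_prob_bounds)
  show ?thesis unfolding opt_err_def by (rule cINF_lower[OF bdd UNIV_I])
qed

lemma opt_err_bounds: "0 \<le> opt_err PV W phi" "opt_err PV W phi \<le> 1"
proof -
  show "0 \<le> opt_err PV W phi" unfolding opt_err_def
    by (rule cINF_greatest) (auto simp: err_prob_bounds)
  show "opt_err PV W phi \<le> 1"
    using opt_err_le_err[of PV W phi undefined] err_prob_bounds[of PV W phi undefined] by linarith
qed

lemma err_prob_int: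
  assumes "finite N" "set_pmf PV \<subseteq> N"
  shows "err_prob PV W phi psi =
    (\<Sum>v\<in>N. pmf PV v * measure_pmf.expectation (W (phi v)) (\<lambda>y. of_bool (v \<noteq> psi y)))"
proof -
  define E where "E = {(v, y). v \<noteq> psi y}"
  have inner: "measure_pmf.expectation (W (phi v) \<bind> (\<lambda>y. return_pmf (v, y))) (indicator E)
      = measure_pmf.expectation (W (phi v)) (\<lambda>y. indicator E (v, y) :: real)" for v
    apply (subst integral_bind_pmf_bounded[where B=1])
    apply (auto simp: expectation_return_pmf indicator_def)
    done
  have "err_prob PV W phi psi = measure_pmf.expectation PV
      (\<lambda>v. measure_pmf.expectation (W (phi v)) (\<lambda>y. indicator E (v, y)))"
    unfolding err_prob_def prob_as_exp E_def[symmetric]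
    apply (subst integral_bind_pmf_bounded[where B=1])
    apply (auto simp: indicator_def)[1]
    apply (simp only: inner)
    done
  also have "\<dots> = (\<Sum>v\<in>N. measure_pmf.expectation (W (phi v)) (\<lambda>y. indicator E (v, y)) * pmf PV v)"
    by (rule integral_measure_pmf_real) (use assms in auto)
  also have "\<dots> = (\<Sum>v\<in>N. pmf PV v * measure_pmf.expectation (W (phi v)) (\<lambda>y. of_bool (v \<noteq> psi y)))"
    by (simp add: indicator_def E_def mult.commute)
  finally show ?thesis .
qed

lemma fubini_pmf:
  fixes g :: "'a \<Rightarrow> 'b \<Rightarrow> real"
  assumes "\<And>a b. \<bar>g a b\<bar> \<le> B"
  shows "measure_pmf.expectation A (\<lambda>a. measure_pmf.expectation C (\<lambda>b. g a b)) =
         measure_pmf.expectation C (\<lambda>b. measure_pmf.expectation A (\<lambda>a. g a b))"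
proof -
  have b: "\<And>z. \<bar>case_prod g z\<bar> \<le> B" using assms by auto
  have 1: "measure_pmf.expectation (bind_pmf A (\<lambda>a. bind_pmf C (\<lambda>b. return_pmf (a, b)))) (case_prod g) =
     measure_pmf.expectation A (\<lambda>a. measure_pmf.expectation C (\<lambda>b. g a b))"
    apply (subst integral_bind_pmf_bounded[OF b])
    apply (subst integral_bind_pmf_bounded[OF b])
    apply (simp add: expectation_return_pmf)
    done
  have 2: "measure_pmf.expectation (bind_pmf C (\<lambda>b. bind_pmf A (\<lambda>a. return_pmf (a, b)))) (case_prod g) =
     measure_pmf.expectation C (\<lambda>b. measure_pmf.expectation A (\<lambda>a. g a b))"
    apply (subst integral_bind_pmf_bounded[OF b])
    apply (subst integral_bind_pmf_bounded[OF b])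
    apply (simp add: expectation_return_pmf)
    done
  have 3: "bind_pmf A (\<lambda>a. bind_pmf C (\<lambda>b. return_pmf (a, b))) = bind_pmf C (\<lambda>b. bind_pmf A (\<lambda>a. return_pmf (a, b)))"
    by (rule bind_commute_pmf)
  show ?thesis using 1 2 3 by simp
qed

lemma seqs_iff[simp]: "xs \<in> seqs k \<longleftrightarrow> length xs = k" by (simp add: seqs_def)

lemma seqs_finite[simp]: "finite (seqs k :: 'a::finite list set)"
  unfolding seqs_def using finite_lists_length_eq[of "UNIV::'a set" k] by simp

lemma card_seqs: "card (seqs k :: 'a::finite list set) = CARD('a) ^ k"
  unfolding seqs_def using card_lists_length_eq[of "UNIV::'a set" k] by simp

lemma seqs_ne: "seqs k \<noteq> {}"
  using seqs_iff[of "replicate k undefined" k] by (metis empty_iff length_replicate)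

lemma length_vadd[simp]: "length (vadd a b) = min (length a) (length b)" by (simp add: vadd_def)
lemma length_vsub[simp]: "length (vsub a b) = min (length a) (length b)" by (simp add: vsub_def)
lemma nth_vadd: "i < length a \<Longrightarrow> i < length b \<Longrightarrow> vadd a b ! i = a ! i + b ! i" by (simp add: vadd_def)
lemma nth_vsub: "i < length a \<Longrightarrow> i < length b \<Longrightarrow> vsub a b ! i = a ! i - b ! i" by (simp add: vsub_def)

lemma vsub_vadd: "length a = length b \<Longrightarrow> vsub (vadd a b) b = a"
  by (rule nth_equalityI) (auto simp: nth_vadd nth_vsub)
lemma vadd_vsub: "length a = length b \<Longrightarrow> vadd (vsub a b) b = a"
  by (rule nth_equalityI) (auto simp: nth_vadd nth_vsub)
lemma vadd_vsub2: "length a = length b \<Longrightarrow> vadd a (vsub b a) = b"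
  by (rule nth_equalityI) (auto simp: nth_vadd nth_vsub)
lemma vsub_vadd_vsub:
  "length a = length u \<Longrightarrow> length a' = length u \<Longrightarrow> vsub u (vadd a' (vsub u a)) = vsub a a'"
  by (rule nth_equalityI) (auto simp: nth_vadd nth_vsub algebra_simps)

lemma vsub_nonzero:
  assumes "length v = length v'" "v \<noteq> v'"
  shows "vsub v v' \<noteq> replicate (length v) 0"
proof
  assume h: "vsub v v' = replicate (length v) 0"
  have "v = v'"
  proof (rule nth_equalityI)
    fix i assume i: "i < length v"
    have "vsub v v' ! i = 0" using h i by simp
    then show "v ! i = v' ! i" using i assms by (simp add: nth_vsub)
  qed (use assms in simp)
  with assms show False by simp
qed

lemma lin_vsub:
  assumes "is_linear_map n l f" "x \<in> seqs n" "y \<in> seqs n"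
  shows "f (vsub x y) = vsub (f x) (f y)"
proof -
  have d: "vsub x y \<in> seqs n" using assms by simp
  have "f x = f (vadd (vsub x y) y)" using assms by (simp add: vadd_vsub)
  also have "\<dots> = vadd (f (vsub x y)) (f y)" using assms d unfolding is_linear_map_def by blast
  finally have "vsub (f x) (f y) = vsub (vadd (f (vsub x y)) (f y)) (f y)" by simp
  also have "\<dots> = f (vsub x y)" using assms d unfolding is_linear_map_def by (simp add: vsub_vadd)
  finally show ?thesis by simp
qed

lemma lin_in: "is_linear_map n l f \<Longrightarrow> x \<in> seqs n \<Longrightarrow> f x \<in> seqs l"
  unfolding is_linear_map_def by blast

lemma permute_vsub:
  assumes "s permutes {..<length x}" "length y = length x"
  shows "permute_list s (vsub x y) = vsub (permute_list s x) (permute_list s y)"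
proof (rule nth_equalityI)
  fix i assume i: "i < length (permute_list s (vsub x y))"
  have si: "s i < length x" using permutes_in_image[OF assms(1)] i by simp
  have p1: "s permutes {..<length (vsub x y)}" using assms by simp
  have p2: "s permutes {..<length y}" using assms by simp
  show "permute_list s (vsub x y) ! i = vsub (permute_list s x) (permute_list s y) ! i"
    using i si assms by (simp add: permute_list_nth[OF p1] permute_list_nth[OF p2]
          permute_list_nth[OF assms(1)] nth_vsub)
qed (use assms in simp)

lemma type_eq_iff:
  assumes "length xs = length ys" "length xs > 0"
  shows "type_of xs = type_of ys \<longleftrightarrow> mset xs = mset ys"
  using assms by (auto simp: type_of_def fun_eq_iff multiset_eq_iff count_mset)

lemma multinom_type:
  assumes "length w = k" "k > 0"
  shows "multinom k (type_of (w::'a::finite list)) = real (card (permutations_of_multiset (mset w)))"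
proof -
  have fl: "nat \<lfloor>real k * type_of w a\<rfloor> = count (mset w) a" for a
    using assms by (simp add: type_of_def count_mset)
  have pr: "(\<Prod>a\<in>UNIV. fact (count (mset w) a) :: real) = (\<Prod>a\<in>set_mset (mset w). fact (count (mset w) a))"
    by (rule prod.mono_neutral_right) (auto simp: count_mset)
  have "real (card (permutations_of_multiset (mset w))) * (\<Prod>a\<in>set_mset (mset w). fact (count (mset w) a) :: real)
        = fact k"
    using arg_cong[OF card_permutations_of_multiset_aux[of "mset w"], of real] assms
    by (simp add: of_nat_prod)
  moreover have "(\<Prod>a\<in>set_mset (mset w). fact (count (mset w) a) :: real) \<noteq> 0" by simp
  ultimately show ?thesis
    unfolding multinom_def fl pr by (simp add: field_simps)
qed

lemma perm_fiber_card:
  assumes "mset w' = mset w"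
  shows "card {s. s permutes {..<length w} \<and> permute_list s w = w'} =
         card {s. s permutes {..<length w} \<and> permute_list s w = w}"
proof -
  obtain tau where tau: "tau permutes {..<length w}" "permute_list tau w = w'"
    using mset_eq_permutation[OF assms] by blast
  let ?A = "{s. s permutes {..<length w} \<and> permute_list s w = w}"
  let ?B = "{s. s permutes {..<length w} \<and> permute_list s w = w'}"
  have inv: "inv tau permutes {..<length w}" using permutes_inv[OF tau(1)] .
  have "?B = (\<lambda>s. s \<circ> tau) ` ?A"
  proof (intro set_eqI iffI)
    fix s' assume s': "s' \<in> ?B"
    have "s' \<circ> inv tau \<in> ?A"
    proof -
      have "permute_list (s' \<circ> inv tau) w = permute_list (inv tau) (permute_list s' w)"
        using permute_list_compose[of "inv tau" w s'] inv by simp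
      also have "\<dots> = permute_list (inv tau) (permute_list tau w)" using s' tau by simp
      also have "\<dots> = permute_list (tau \<circ> inv tau) w"
        using permute_list_compose[of "inv tau" w tau] inv by simp
      also have "\<dots> = w" using permutes_inv_o(1)[OF tau(1)] by simp
      finally show ?thesis using s' inv permutes_compose by blast
    qed
    moreover have "s' = (s' \<circ> inv tau) \<circ> tau"
      using permutes_inv_o(2)[OF tau(1)] by (simp add: o_assoc[symmetric])
    ultimately show "s' \<in> (\<lambda>s. s \<circ> tau) ` ?A" by blast
  next
    fix s' assume "s' \<in> (\<lambda>s. s \<circ> tau) ` ?A"
    then obtain s where s: "s \<in> ?A" "s' = s \<circ> tau" by blast
    have "permute_list (s \<circ> tau) w = permute_list tau (permute_list s w)"
      using permute_list_compose[of tau w s] tau by simp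
    then show "s' \<in> ?B" using s tau permutes_compose by auto
  qed
  moreover have "inj_on (\<lambda>s. s \<circ> tau) ?A"
  proof (rule inj_onI)
    fix s1 s2 assume "s1 \<circ> tau = s2 \<circ> tau"
    then have "s1 \<circ> tau \<circ> inv tau = s2 \<circ> tau \<circ> inv tau" by simp
    then show "s1 = s2" using permutes_inv_o(1)[OF tau(1)] by (simp add: o_assoc[symmetric])
  qed
  ultimately show ?thesis by (simp add: card_image)
qed

lemma perm_avg:
  fixes w :: "'a list" and h :: "'a list \<Rightarrow> real"
  shows "(\<Sum>s\<in>{s. s permutes {..<length w}}. h (permute_list s w)) / fact (length w) =
         (\<Sum>w'\<in>permutations_of_multiset (mset w). h w') / real (card (permutations_of_multiset (mset w)))"
proof -
  let ?P = "{s. s permutes {..<length w}}"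
  let ?T = "permutations_of_multiset (mset w)"
  let ?c = "card {s. s permutes {..<length w} \<and> permute_list s w = w}"
  have finP: "finite ?P" by (rule finite_permutations) simp
  have img: "(\<lambda>s. permute_list s w) ` ?P \<subseteq> ?T"
    by (auto simp: permutations_of_multiset_def)
  have fib: "{s \<in> ?P. permute_list s w = w'} = {s. s permutes {..<length w} \<and> permute_list s w = w'}" for w'
    by auto
  have gen: "(\<Sum>s\<in>?P. g (permute_list s w)) = real ?c * (\<Sum>w'\<in>?T. g w')" for g :: "'a list \<Rightarrow> real"
  proof -
    have "(\<Sum>s\<in>?P. g (permute_list s w)) = (\<Sum>w'\<in>?T. \<Sum>s\<in>{s \<in> ?P. permute_list s w = w'}. g (permute_list s w))"
      by (rule sum.group[symmetric]) (use finP img in auto)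
    also have "\<dots> = (\<Sum>w'\<in>?T. real ?c * g w')"
    proof (rule sum.cong[OF refl])
      fix w' assume "w' \<in> ?T"
      then have m: "mset w' = mset w" by (simp add: permutations_of_multiset_def)
      have "(\<Sum>s\<in>{s \<in> ?P. permute_list s w = w'}. g (permute_list s w)) =
            (\<Sum>s\<in>{s \<in> ?P. permute_list s w = w'}. g w')" by simp
      also have "\<dots> = real ?c * g w'" using perm_fiber_card[OF m] by (simp add: fib)
      finally show "(\<Sum>s\<in>{s \<in> ?P. permute_list s w = w'}. g (permute_list s w)) = real ?c * g w'" .
    qed
    finally show ?thesis by (simp add: sum_distrib_left)
  qed
  have cardP: "card ?P = fact (length w)" using card_permutations[of "{..<length w}" "length w"] by simp
  have "real (card ?P) = real ?c * real (card ?T)" using gen[of "\<lambda>_. 1"] by simp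
  then have fc: "fact (length w) = real ?c * real (card ?T)" using cardP by (metis of_nat_fact)
  have cpos: "?c > 0"
  proof -
    have "id \<in> {s. s permutes {..<length w} \<and> permute_list s w = w}" by simp
    moreover have "finite {s. s permutes {..<length w} \<and> permute_list s w = w}"
      using finP by (rule finite_subset[rotated]) auto
    ultimately show ?thesis using card_gt_0_iff by blast
  qed
  show ?thesis unfolding gen fc using cpos by simp
qed

lemma sum_of_bool_eq: "finite A \<Longrightarrow> (\<Sum>x\<in>A. of_bool (x = z) :: real) = of_bool (z \<in> A)"
  by (induction A rule: finite_induct) auto

lemma avg_t:
  fixes y z :: "'a list"
  assumes "length y = l" "length z = l"
  shows "(\<Sum>t\<in>{t. t permutes {..<l}}. of_bool (permute_list t y = z)) / fact l =
         of_bool (mset y = mset z) / real (card (permutations_of_multiset (mset z)))"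
proof -
  have "(\<Sum>t\<in>{t. t permutes {..<l}}. of_bool (permute_list t y = z)) / fact l =
     (\<Sum>w'\<in>permutations_of_multiset (mset y). of_bool (w' = z)) / real (card (permutations_of_multiset (mset y)))"
    using perm_avg[of "\<lambda>x. of_bool (x = z)" y] assms by simp
  also have "\<dots> = of_bool (z \<in> permutations_of_multiset (mset y)) / real (card (permutations_of_multiset (mset y)))"
    by (simp add: sum_of_bool_eq)
  also have "\<dots> = of_bool (mset y = mset z) / real (card (permutations_of_multiset (mset z)))"
    by (cases "mset y = mset z") (auto simp: permutations_of_multiset_def)
  finally show ?thesis .
qed

lemma inner_prob:
  fixes f :: "'v::{finite,ab_group_add} list \<Rightarrow> 'u::{finite,ab_group_add} list"
  assumes lin: "is_linear_map n l f" and n: "n \<ge> 1" and l: "l \<ge> 1" and w: "w \<in> seqs n" and z: "z \<in> seqs l"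
  shows "(\<Sum>s\<in>{s. s permutes {..<n}}. \<Sum>t\<in>{t. t permutes {..<l}}. of_bool (permute_list t (f (permute_list s w)) = z)) / (fact n * fact l)
     = S_count n f (type_of w) (type_of z) * real CARD('v) ^ n /
        (real (card (permutations_of_multiset (mset w))) * real (card (permutations_of_multiset (mset z))))"
proof -
  let ?Tw = "permutations_of_multiset (mset w)"
  let ?Tz = "permutations_of_multiset (mset z)"
  have "(\<Sum>s\<in>{s. s permutes {..<n}}. \<Sum>t\<in>{t. t permutes {..<l}}. of_bool (permute_list t (f (permute_list s w)) = z)) / (fact n * fact l :: real)
     = (\<Sum>s\<in>{s. s permutes {..<n}}. (\<Sum>t\<in>{t. t permutes {..<l}}. of_bool (permute_list t (f (permute_list s w)) = z)) / fact l) / fact n"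
    unfolding sum_divide_distrib[symmetric] by (simp add: divide_divide_eq_left mult.commute)
  also have "\<dots> = (\<Sum>s\<in>{s. s permutes {..<n}}. of_bool (mset (f (permute_list s w)) = mset z) / real (card ?Tz)) / fact n"
  proof -
    have "(\<Sum>t\<in>{t. t permutes {..<l}}. of_bool (permute_list t (f (permute_list s w)) = z)) / (fact l :: real)
       = of_bool (mset (f (permute_list s w)) = mset z) / real (card ?Tz)" for s
      using avg_t[of "f (permute_list s w)" l z] lin_in[OF lin, of "permute_list s w"] w z by simp
    then show ?thesis by simp
  qed
  also have "\<dots> = ((\<Sum>s\<in>{s. s permutes {..<length w}}. of_bool (mset (f (permute_list s w)) = mset z)) / fact (length w)) / real (card ?Tz)"
    unfolding sum_divide_distrib[symmetric] using w by (simp add: divide_divide_eq_left mult.commute)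
  also have "\<dots> = ((\<Sum>w'\<in>?Tw. of_bool (mset (f w') = mset z)) / real (card ?Tw)) / real (card ?Tz)"
    by (subst perm_avg[of "\<lambda>x. of_bool (mset (f x) = mset z)" w]) simp
  also have "(\<Sum>w'\<in>?Tw. of_bool (mset (f w') = mset z) :: real) = real (card {w'\<in>?Tw. mset (f w') = mset z})"
    by (simp add: of_bool_def sum.If_cases Int_def)
  also have "{w'\<in>?Tw. mset (f w') = mset z} = {v\<in>seqs n. type_of v = type_of w \<and> type_of (f v) = type_of z}"
  proof (intro set_eqI iffI)
    fix v assume "v \<in> {w'\<in>?Tw. mset (f w') = mset z}"
    then have m: "mset v = mset w" "mset (f v) = mset z" by (auto simp: permutations_of_multiset_def)
    then have lv: "length v = n" using w by (metis seqs_iff size_mset)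
    have "f v \<in> seqs l" using lin_in[OF lin] lv by simp
    then show "v \<in> {v\<in>seqs n. type_of v = type_of w \<and> type_of (f v) = type_of z}"
      using m lv w z n l by (simp add: type_eq_iff)
  next
    fix v assume v: "v \<in> {v\<in>seqs n. type_of v = type_of w \<and> type_of (f v) = type_of z}"
    then have "f v \<in> seqs l" using lin_in[OF lin] by simp
    then have fv: "length (f v) = l" by simp
    have "mset v = mset w" using v w n type_eq_iff[of v w] by auto
    moreover have "mset (f v) = mset z" using v z l fv type_eq_iff[of "f v" z] by auto
    ultimately show "v \<in> {w'\<in>?Tw. mset (f w') = mset z}"
      by (auto simp: permutations_of_multiset_def)
  qed
  finally show ?thesis unfolding S_count_def by simp
qed

lemma prob_a:
  fixes F :: "('v::{finite,ab_group_add} list \<Rightarrow> 'u::{finite,ab_group_add} list) pmf"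
  assumes lin: "random_linear_code n l F" and n: "n \<ge> 1" and l: "l \<ge> 1" and w: "w \<in> seqs n" and z: "z \<in> seqs l"
  shows "measure_pmf.expectation F (\<lambda>f. (\<Sum>s\<in>{s. s permutes {..<n}}. \<Sum>t\<in>{t. t permutes {..<l}}.
            of_bool (permute_list t (f (permute_list s w)) = z)) / (fact n * fact l))
       = alpha n l F (type_of w) (type_of z) / real CARD('u) ^ l"
proof -
  let ?cw = "real (card (permutations_of_multiset (mset w)))"
  let ?cz = "real (card (permutations_of_multiset (mset z)))"
  have "measure_pmf.expectation F (\<lambda>f. (\<Sum>s\<in>{s. s permutes {..<n}}. \<Sum>t\<in>{t. t permutes {..<l}}.
            of_bool (permute_list t (f (permute_list s w)) = z)) / (fact n * fact l))
     = measure_pmf.expectation F (\<lambda>f. S_count n f (type_of w) (type_of z) * (real CARD('v) ^ n / (?cw * ?cz)))"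
  proof (rule integral_cong_AE)
    show "AE f in measure_pmf F. (\<Sum>s\<in>{s. s permutes {..<n}}. \<Sum>t\<in>{t. t permutes {..<l}}.
            of_bool (permute_list t (f (permute_list s w)) = z)) / (fact n * fact l) =
          S_count n f (type_of w) (type_of z) * (real CARD('v) ^ n / (?cw * ?cz))"
    proof (rule AE_pmfI)
      fix f assume "f \<in> set_pmf F"
      then have "is_linear_map n l f" using lin unfolding random_linear_code_def by blast
      then show "(\<Sum>s\<in>{s. s permutes {..<n}}. \<Sum>t\<in>{t. t permutes {..<l}}.
            of_bool (permute_list t (f (permute_list s w)) = z)) / (fact n * fact l) =
          S_count n f (type_of w) (type_of z) * (real CARD('v) ^ n / (?cw * ?cz))"
        using inner_prob[of n l f w z] n l w z by simp
    qed
  qed simp_all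
  also have "\<dots> = measure_pmf.expectation F (\<lambda>f. S_count n f (type_of w) (type_of z)) * (real CARD('v) ^ n / (?cw * ?cz))"
    by simp
  also have "\<dots> = alpha n l F (type_of w) (type_of z) / real CARD('u) ^ l"
  proof -
    have mw: "multinom n (type_of w) = ?cw" using multinom_type[of w n] w n by simp
    have mz: "multinom l (type_of z) = ?cz" using multinom_type[of z l] z l by simp
    have pw: "?cw > 0" "?cz > 0" by (simp_all add: card_gt_0_iff)
    show ?thesis unfolding alpha_def mw mz
      using pw by (simp add: power_int_minus field_simps)
  qed
  finally show ?thesis .
qed

lemma integrable_of_bool[simp]: "integrable (measure_pmf p) (\<lambda>x. of_bool (P x) :: real)"
  by (rule integrable_pmf_bounded[where C=1]) auto

lemma opt_err_le_Bd:
  assumes "finite N" "N \<noteq> {}" "set_pmf PV \<subseteq> N"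
  shows "opt_err PV W phi \<le> (\<Sum>v\<in>N. pmf PV v * measure_pmf.expectation (W (phi v)) (\<lambda>y.
      of_bool (\<exists>v'\<in>N. v' \<noteq> v \<and> pmf PV v * pmf (W (phi v)) y \<le> pmf PV v' * pmf (W (phi v')) y)))"
proof -
  define sc where "sc y v = pmf PV v * pmf (W (phi v)) y" for y v
  define psi where "psi y = (SOME v. v \<in> N \<and> (\<forall>w\<in>N. sc y w \<le> sc y v))" for y
  have ex: "\<exists>v. v \<in> N \<and> (\<forall>w\<in>N. sc y w \<le> sc y v)" for y
  proof -
    have "Max (sc y ` N) \<in> sc y ` N" using assms by (intro Max_in) auto
    then obtain v where v: "v \<in> N" "sc y v = Max (sc y ` N)" by auto
    have "\<forall>w\<in>N. sc y w \<le> sc y v" using v assms by (auto intro: Max_ge)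
    with v show ?thesis by blast
  qed
  have psi: "psi y \<in> N \<and> (\<forall>w\<in>N. sc y w \<le> sc y (psi y))" for y
    unfolding psi_def by (rule someI_ex[OF ex])
  have "opt_err PV W phi \<le> err_prob PV W phi psi" by (rule opt_err_le_err)
  also have "\<dots> = (\<Sum>v\<in>N. pmf PV v * measure_pmf.expectation (W (phi v)) (\<lambda>y. of_bool (v \<noteq> psi y)))"
    by (rule err_prob_int) (use assms in auto)
  also have "\<dots> \<le> (\<Sum>v\<in>N. pmf PV v * measure_pmf.expectation (W (phi v)) (\<lambda>y.
      of_bool (\<exists>v'\<in>N. v' \<noteq> v \<and> pmf PV v * pmf (W (phi v)) y \<le> pmf PV v' * pmf (W (phi v')) y)))"
  proof (intro sum_mono mult_left_mono integral_mono)
    fix v y assume v: "v \<in> N"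
    have "v \<noteq> psi y \<Longrightarrow> (\<exists>v'\<in>N. v' \<noteq> v \<and> pmf PV v * pmf (W (phi v)) y \<le> pmf PV v' * pmf (W (phi v')) y)"
      using psi[of y] v unfolding sc_def by metis
    then show "of_bool (v \<noteq> psi y) \<le> (of_bool (\<exists>v'\<in>N. v' \<noteq> v \<and> pmf PV v * pmf (W (phi v)) y \<le> pmf PV v' * pmf (W (phi v')) y) :: real)"
      by auto
  qed auto
  finally show ?thesis .
qed

lemma joint_exp:
  fixes h :: "'v list \<times> 'x list \<times> 'y list \<Rightarrow> real" and q :: "'v list \<Rightarrow> 'u::finite list \<Rightarrow> 'x list"
  assumes "\<And>z. \<bar>h z\<bar> \<le> B" "finite N" "set_pmf PV \<subseteq> N"
  shows "measure_pmf.expectation (joint_VXY l PV W q) h =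
    (\<Sum>v\<in>N. pmf PV v * (\<Sum>u\<in>seqs l. measure_pmf.expectation (W (q v u)) (\<lambda>y. h (v, q v u, y))))
      / real (card (seqs l :: 'u list set))"
proof -
  have i3: "measure_pmf.expectation (W (q v u) \<bind> (\<lambda>y. return_pmf (v, q v u, y))) h =
      measure_pmf.expectation (W (q v u)) (\<lambda>y. h (v, q v u, y))" for v u
    apply (subst integral_bind_pmf_bounded[where B=B])
    apply (auto simp: expectation_return_pmf assms(1))
    done
  have i2: "measure_pmf.expectation (pmf_of_set (seqs l) \<bind> (\<lambda>u. W (q v u) \<bind> (\<lambda>y. return_pmf (v, q v u, y)))) h =
     measure_pmf.expectation (pmf_of_set (seqs l)) (\<lambda>u. measure_pmf.expectation (W (q v u)) (\<lambda>y. h (v, q v u, y)))" for v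
    apply (subst integral_bind_pmf_bounded[where B=B])
    apply (auto simp: assms(1))[1]
    apply (simp only: i3)
    done
  have "measure_pmf.expectation (joint_VXY l PV W q) h =
     measure_pmf.expectation PV (\<lambda>v. measure_pmf.expectation (pmf_of_set (seqs l)) (\<lambda>u. measure_pmf.expectation (W (q v u)) (\<lambda>y. h (v, q v u, y))))"
    unfolding joint_VXY_def
    apply (subst integral_bind_pmf_bounded[where B=B])
    apply (auto simp: assms(1))[1]
    apply (simp only: i2)
    done
  also have "\<dots> = (\<Sum>v\<in>N. measure_pmf.expectation (pmf_of_set (seqs l)) (\<lambda>u. measure_pmf.expectation (W (q v u)) (\<lambda>y. h (v, q v u, y))) * pmf PV v)"
    by (rule integral_measure_pmf_real) (use assms in auto)
  also have "\<dots> = (\<Sum>v\<in>N. pmf PV v * (\<Sum>u\<in>seqs l. measure_pmf.expectation (W (q v u)) (\<lambda>y. h (v, q v u, y))) / real (card (seqs l :: 'u list set)))"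
    by (simp add: integral_pmf_of_set[OF seqs_ne seqs_finite] mult.commute)
  finally show ?thesis by (simp add: sum_divide_distrib)
qed

lemma avg_err_formula:
  fixes F :: "('v list \<Rightarrow> 'u::{finite,ab_group_add} list) pmf"
  shows "avg_err n l PV W F q = measure_pmf.expectation F (\<lambda>f.
     (\<Sum>s\<in>{s. s permutes {..<n}}. \<Sum>t\<in>{t. t permutes {..<l}}. \<Sum>ub\<in>seqs l.
        opt_err PV W (\<lambda>v. q v (vadd (permute_list t (f (permute_list s v))) ub)))
     / (fact n * fact l * real (card (seqs l :: 'u list set))))"
proof -
  have e1: "measure_pmf.expectation (bind_pmf M N) (opt_err PV W) =
      measure_pmf.expectation M (\<lambda>x. measure_pmf.expectation (N x) (opt_err PV W))" for M :: "'z pmf" and N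
    by (rule integral_bind_pmf_bounded[where B=1]) (metis abs_of_nonneg opt_err_bounds)
  have pn1: "{s. s permutes {..<k}} \<noteq> {}" for k :: nat
    using permutes_id[of "{..<k}"] by blast
  have pn2: "finite {s. s permutes {..<k}}" for k :: nat
    by (rule finite_permutations) simp
  have cp: "real (card {s. s permutes {..<k}}) = fact k" for k :: nat
    using card_permutations[of "{..<k}" k] by simp
  show ?thesis
    unfolding avg_err_def rand_encoder_def rand_perm_def
    by (simp only: e1 expectation_return_pmf integral_pmf_of_set[OF pn1 pn2] integral_pmf_of_set[OF seqs_ne seqs_finite] cp)
       (simp add: sum_divide_distrib[symmetric] divide_divide_eq_left mult.commute mult.left_commute)
qed

definition amap :: "('v list \<Rightarrow> 'u list) \<Rightarrow> (nat \<Rightarrow> nat) \<Rightarrow> (nat \<Rightarrow> nat) \<Rightarrow> 'v list \<Rightarrow> 'u list" where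
  "amap f s t w = permute_list t (f (permute_list s w))"

definition IND :: "nat \<Rightarrow> 'v list pmf \<Rightarrow> ('x list \<Rightarrow> 'y list pmf) \<Rightarrow> ('v list \<Rightarrow> 'u::ab_group_add list \<Rightarrow> 'x list)
   \<Rightarrow> ('v list \<Rightarrow> 'u list) \<Rightarrow> (nat \<Rightarrow> nat) \<Rightarrow> (nat \<Rightarrow> nat) \<Rightarrow> 'v list \<Rightarrow> 'u list \<Rightarrow> 'y list \<Rightarrow> real" where
  "IND n PV W q f s t v u y = of_bool (\<exists>v'\<in>seqs n. v' \<noteq> v \<and> pmf PV v * pmf (W (q v u)) y \<le>
      pmf PV v' * pmf (W (q v' (vadd (amap f s t v') (vsub u (amap f s t v))))) y)"

lemma vsub_vadd2: "length a = length b \<Longrightarrow> vsub (vadd a b) a = b"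
  by (rule nth_equalityI) (auto simp: nth_vadd nth_vsub)

lemma amap_in: "is_linear_map n l f \<Longrightarrow> v \<in> seqs n \<Longrightarrow> amap f s t v \<in> seqs l"
  unfolding amap_def using lin_in[of n l f "permute_list s v"] by simp

lemma swap2: "(\<Sum>t\<in>B. \<Sum>v\<in>C. \<Sum>u\<in>D. X t v u) = (\<Sum>v\<in>C. \<Sum>u\<in>D. \<Sum>t\<in>B. X t v u :: real)"
proof -
  have "(\<Sum>t\<in>B. \<Sum>v\<in>C. \<Sum>u\<in>D. X t v u) = (\<Sum>v\<in>C. \<Sum>t\<in>B. \<Sum>u\<in>D. X t v u)"
    by (rule sum.swap)
  also have "\<dots> = (\<Sum>v\<in>C. \<Sum>u\<in>D. \<Sum>t\<in>B. X t v u)"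
    by (rule sum.cong[OF refl], rule sum.swap)
  finally show ?thesis .
qed

lemma swap_main: "(\<Sum>s\<in>A. \<Sum>t\<in>B. \<Sum>v\<in>C. c v * (\<Sum>u\<in>D. X s t v u)) =
   (\<Sum>v\<in>C. c v * (\<Sum>u\<in>D. \<Sum>s\<in>A. \<Sum>t\<in>B. X s t v u :: real))"
proof -
  have "(\<Sum>s\<in>A. \<Sum>t\<in>B. \<Sum>v\<in>C. c v * (\<Sum>u\<in>D. X s t v u)) =
        (\<Sum>s\<in>A. \<Sum>t\<in>B. \<Sum>v\<in>C. \<Sum>u\<in>D. c v * X s t v u)"
    by (simp add: sum_distrib_left)
  also have "\<dots> = (\<Sum>s\<in>A. \<Sum>v\<in>C. \<Sum>u\<in>D. \<Sum>t\<in>B. c v * X s t v u)"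
    by (rule sum.cong[OF refl], rule swap2)
  also have "\<dots> = (\<Sum>v\<in>C. \<Sum>u\<in>D. \<Sum>s\<in>A. \<Sum>t\<in>B. c v * X s t v u)"
    by (rule swap2)
  also have "\<dots> = (\<Sum>v\<in>C. c v * (\<Sum>u\<in>D. \<Sum>s\<in>A. \<Sum>t\<in>B. X s t v u))"
    by (simp add: sum_distrib_left)
  finally show ?thesis .
qed

lemma integrable_IND[simp]: "integrable (measure_pmf p) (\<lambda>y. IND n PV W q f s t v u y)"
  unfolding IND_def by simp

lemma step_st:
  fixes f :: "'v::{finite,ab_group_add} list \<Rightarrow> 'u::{finite,ab_group_add} list"
    and PV :: "'v list pmf" and W :: "'x list \<Rightarrow> 'y list pmf"
  assumes lin: "is_linear_map n l f" and PVsub: "set_pmf PV \<subseteq> seqs n"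
  shows "(\<Sum>ub\<in>seqs l. opt_err PV W (\<lambda>v. q v (vadd (permute_list t (f (permute_list s v))) ub)))
     \<le> (\<Sum>v\<in>seqs n. pmf PV v * (\<Sum>u\<in>seqs l. measure_pmf.expectation (W (q v u)) (\<lambda>y. IND n PV W q f s t v u y)))"
proof -
  let ?a = "amap f s t"
  let ?enc = "\<lambda>ub v. q v (vadd (?a v) ub)"
  let ?G = "\<lambda>ub v. measure_pmf.expectation (W (?enc ub v)) (\<lambda>y.
      of_bool (\<exists>v'\<in>seqs n. v' \<noteq> v \<and> pmf PV v * pmf (W (?enc ub v)) y \<le> pmf PV v' * pmf (W (?enc ub v')) y) :: real)"
  have "(\<Sum>ub\<in>seqs l. opt_err PV W (\<lambda>v. q v (vadd (permute_list t (f (permute_list s v))) ub)))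
     = (\<Sum>ub\<in>seqs l. opt_err PV W (?enc ub))" by (simp add: amap_def)
  also have "\<dots> \<le> (\<Sum>ub\<in>seqs l. \<Sum>v\<in>seqs n. pmf PV v * ?G ub v)"
  proof (rule sum_mono)
    fix ub :: "'u list" assume ub: "ub \<in> seqs l"
    show "opt_err PV W (?enc ub) \<le> (\<Sum>v\<in>seqs n. pmf PV v * ?G ub v)"
      by (rule opt_err_le_Bd) (use PVsub seqs_ne in auto)
  qed
  also have "\<dots> = (\<Sum>v\<in>seqs n. pmf PV v * (\<Sum>ub\<in>seqs l. ?G ub v))"
    by (subst sum.swap) (simp add: sum_distrib_left)
  also have "\<dots> = (\<Sum>v\<in>seqs n. pmf PV v * (\<Sum>u\<in>seqs l. measure_pmf.expectation (W (q v u)) (\<lambda>y. IND n PV W q f s t v u y)))"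
  proof (rule sum.cong[OF refl])
    fix v :: "'v list" assume v: "v \<in> seqs n"
    have av: "?a v \<in> seqs l" using amap_in[OF lin v] .
    have "(\<Sum>ub\<in>seqs l. ?G ub v) = (\<Sum>u\<in>seqs l. measure_pmf.expectation (W (q v u)) (\<lambda>y. IND n PV W q f s t v u y))"
    proof (rule sum.reindex_bij_witness[where j="\<lambda>ub. vadd (?a v) ub" and i="\<lambda>u. vsub u (?a v)"])
      fix ub :: "'u list" assume "ub \<in> seqs l"
      then show "vsub (vadd (?a v) ub) (?a v) = ub" "vadd (?a v) ub \<in> seqs l"
        using av by (simp_all add: vsub_vadd2)
    next
      fix u :: "'u list" assume "u \<in> seqs l"
      then show "vadd (?a v) (vsub u (?a v)) = u" "vsub u (?a v) \<in> seqs l"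
        using av by (simp_all add: vadd_vsub2)
    next
      fix ub :: "'u list" assume ub: "ub \<in> seqs l"
      have e: "vsub (vadd (?a v) ub) (?a v) = ub" using ub av by (simp add: vsub_vadd2)
      show "measure_pmf.expectation (W (q v (vadd (?a v) ub))) (\<lambda>y. IND n PV W q f s t v (vadd (?a v) ub) y) = ?G ub v"
        unfolding IND_def e by simp
    qed
    then show "pmf PV v * (\<Sum>ub\<in>seqs l. ?G ub v)
      = pmf PV v * (\<Sum>u\<in>seqs l. measure_pmf.expectation (W (q v u)) (\<lambda>y. IND n PV W q f s t v u y))" by simp
  qed
  finally show ?thesis .
qed

lemma step_f:
  fixes f :: "'v::{finite,ab_group_add} list \<Rightarrow> 'u::{finite,ab_group_add} list"
    and PV :: "'v list pmf" and W :: "'x list \<Rightarrow> 'y list pmf"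
  assumes lin: "is_linear_map n l f" and PVsub: "set_pmf PV \<subseteq> seqs n"
  shows "(\<Sum>s\<in>{s. s permutes {..<n}}. \<Sum>t\<in>{t. t permutes {..<l}}. \<Sum>ub\<in>seqs l.
        opt_err PV W (\<lambda>v. q v (vadd (permute_list t (f (permute_list s v))) ub)))
     / (fact n * fact l * real (card (seqs l :: 'u list set)))
   \<le> (\<Sum>v\<in>seqs n. pmf PV v * (\<Sum>u\<in>seqs l. measure_pmf.expectation (W (q v u)) (\<lambda>y.
        (\<Sum>s\<in>{s. s permutes {..<n}}. \<Sum>t\<in>{t. t permutes {..<l}}. IND n PV W q f s t v u y) / (fact n * fact l))))
     / real (card (seqs l :: 'u list set))"
proof -
  have "(\<Sum>s\<in>{s. s permutes {..<n}}. \<Sum>t\<in>{t. t permutes {..<l}}. \<Sum>ub\<in>seqs l.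
        opt_err PV W (\<lambda>v. q v (vadd (permute_list t (f (permute_list s v))) ub)))
     \<le> (\<Sum>s\<in>{s. s permutes {..<n}}. \<Sum>t\<in>{t. t permutes {..<l}}.
        (\<Sum>v\<in>seqs n. pmf PV v * (\<Sum>u\<in>seqs l. measure_pmf.expectation (W (q v u)) (\<lambda>y. IND n PV W q f s t v u y))))"
    by (intro sum_mono step_st[OF lin PVsub])
  also have "\<dots> = (\<Sum>v\<in>seqs n. pmf PV v * (\<Sum>u\<in>seqs l.
        \<Sum>s\<in>{s. s permutes {..<n}}. \<Sum>t\<in>{t. t permutes {..<l}}. measure_pmf.expectation (W (q v u)) (\<lambda>y. IND n PV W q f s t v u y)))"
    by (rule swap_main)
  also have "\<dots> = (\<Sum>v\<in>seqs n. pmf PV v * (\<Sum>u\<in>seqs l. measure_pmf.expectation (W (q v u)) (\<lambda>y.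
        (\<Sum>s\<in>{s. s permutes {..<n}}. \<Sum>t\<in>{t. t permutes {..<l}}. IND n PV W q f s t v u y) / (fact n * fact l)))) * (fact n * fact l)"
  proof -
    have inner: "(\<Sum>s\<in>{s. s permutes {..<n}}. \<Sum>t\<in>{t. t permutes {..<l}}. measure_pmf.expectation (W (q v u)) (\<lambda>y. IND n PV W q f s t v u y))
      = measure_pmf.expectation (W (q v u)) (\<lambda>y.
        (\<Sum>s\<in>{s. s permutes {..<n}}. \<Sum>t\<in>{t. t permutes {..<l}}. IND n PV W q f s t v u y) / (fact n * fact l)) * (fact n * fact l)" for v u
    proof -
      have "measure_pmf.expectation (W (q v u)) (\<lambda>y.
        (\<Sum>s\<in>{s. s permutes {..<n}}. \<Sum>t\<in>{t. t permutes {..<l}}. IND n PV W q f s t v u y) / (fact n * fact l))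
        = measure_pmf.expectation (W (q v u)) (\<lambda>y.
        (\<Sum>s\<in>{s. s permutes {..<n}}. \<Sum>t\<in>{t. t permutes {..<l}}. IND n PV W q f s t v u y)) / (fact n * fact l)"
        by (rule integral_divide_zero)
      also have "measure_pmf.expectation (W (q v u)) (\<lambda>y.
        (\<Sum>s\<in>{s. s permutes {..<n}}. \<Sum>t\<in>{t. t permutes {..<l}}. IND n PV W q f s t v u y))
        = (\<Sum>s\<in>{s. s permutes {..<n}}. \<Sum>t\<in>{t. t permutes {..<l}}. measure_pmf.expectation (W (q v u)) (\<lambda>y. IND n PV W q f s t v u y))"
        by simp
      finally show ?thesis by simp
    qed
    show ?thesis by (simp only: inner) (simp add: sum_distrib_right mult.assoc)
  qed
  finally have le: "(\<Sum>s\<in>{s. s permutes {..<n}}. \<Sum>t\<in>{t. t permutes {..<l}}. \<Sum>ub\<in>seqs l.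
        opt_err PV W (\<lambda>v. q v (vadd (permute_list t (f (permute_list s v))) ub))) \<le>
      (\<Sum>v\<in>seqs n. pmf PV v * (\<Sum>u\<in>seqs l. measure_pmf.expectation (W (q v u)) (\<lambda>y.
        (\<Sum>s\<in>{s. s permutes {..<n}}. \<Sum>t\<in>{t. t permutes {..<l}}. IND n PV W q f s t v u y) / (fact n * fact l)))) * (fact n * fact l)" .
  have pos: "real (card (seqs l :: 'u list set)) > 0"
    using seqs_ne[of l] by (simp add: card_gt_0_iff)
  have pos2: "fact n * fact l > (0::real)" by simp
  show ?thesis using le pos pos2
    by (simp add: field_simps)
qed

lemma exp_bounds01:
  assumes "\<And>y. 0 \<le> g y" "\<And>y. g y \<le> (1::real)"
  shows "0 \<le> measure_pmf.expectation p g" "measure_pmf.expectation p g \<le> 1"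
proof -
  have int: "integrable (measure_pmf p) g"
    by (rule integrable_pmf_bounded[where C=1]) (use assms in \<open>auto simp: abs_le_iff\<close>)
  show "0 \<le> measure_pmf.expectation p g" using assms by (simp add: integral_nonneg_AE)
  have "measure_pmf.expectation p g \<le> measure_pmf.expectation p (\<lambda>_. 1)"
    by (rule integral_mono) (use int assms in auto)
  then show "measure_pmf.expectation p g \<le> 1" by simp
qed

lemma J_bounds:
  "0 \<le> (\<Sum>s\<in>{s. s permutes {..<n}}. \<Sum>t\<in>{t. t permutes {..<l}}. IND n PV W q f s t v u y) / (fact n * fact l)"
  "(\<Sum>s\<in>{s. s permutes {..<n}}. \<Sum>t\<in>{t. t permutes {..<l}}. IND n PV W q f s t v u y) / (fact n * fact l) \<le> 1"
proof -
  have i01: "0 \<le> IND n PV W q f s t v u y" "IND n PV W q f s t v u y \<le> 1" for s t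
    unfolding IND_def by auto
  show "0 \<le> (\<Sum>s\<in>{s. s permutes {..<n}}. \<Sum>t\<in>{t. t permutes {..<l}}. IND n PV W q f s t v u y) / (fact n * fact l)"
    by (intro divide_nonneg_nonneg sum_nonneg) (auto simp: i01)
  have "(\<Sum>s\<in>{s. s permutes {..<n}}. \<Sum>t\<in>{t. t permutes {..<l}}. IND n PV W q f s t v u y)
      \<le> (\<Sum>s\<in>{s. s permutes {..<n}}. \<Sum>t\<in>{t. t permutes {..<l}}. 1)"
    by (intro sum_mono) (rule i01(2))
  also have "\<dots> = fact n * fact l"
    using card_permutations[of "{..<n}" n] card_permutations[of "{..<l}" l] by simp
  finally show "(\<Sum>s\<in>{s. s permutes {..<n}}. \<Sum>t\<in>{t. t permutes {..<l}}. IND n PV W q f s t v u y) / (fact n * fact l) \<le> 1"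
    by simp
qed

lemma J_abs: "\<bar>(\<Sum>s\<in>{s. s permutes {..<n}}. \<Sum>t\<in>{t. t permutes {..<l}}. IND n PV W q f s t v u y) / (fact n * fact l)\<bar> \<le> 1"
proof -
  have a: "0 \<le> (\<Sum>s\<in>{s. s permutes {..<n}}. \<Sum>t\<in>{t. t permutes {..<l}}. IND n PV W q f s t v u y) / (fact n * fact l)"
    by (rule J_bounds(1))
  have b: "(\<Sum>s\<in>{s. s permutes {..<n}}. \<Sum>t\<in>{t. t permutes {..<l}}. IND n PV W q f s t v u y) / (fact n * fact l) \<le> 1"
    by (rule J_bounds(2))
  show ?thesis by (rule abs_leI) (use a b in linarith)+
qed

lemma EJ_abs: "\<bar>measure_pmf.expectation p (\<lambda>y. (\<Sum>s\<in>{s. s permutes {..<n}}. \<Sum>t\<in>{t. t permutes {..<l}}. IND n PV W q f s t v u y) / (fact n * fact l))\<bar> \<le> 1"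
proof -
  have a: "0 \<le> measure_pmf.expectation p (\<lambda>y. (\<Sum>s\<in>{s. s permutes {..<n}}. \<Sum>t\<in>{t. t permutes {..<l}}. IND n PV W q f s t v u y) / (fact n * fact l))"
    by (rule exp_bounds01(1)) (rule J_bounds(1), rule J_bounds(2))
  have b: "measure_pmf.expectation p (\<lambda>y. (\<Sum>s\<in>{s. s permutes {..<n}}. \<Sum>t\<in>{t. t permutes {..<l}}. IND n PV W q f s t v u y) / (fact n * fact l)) \<le> 1"
    by (rule exp_bounds01(2)) (rule J_bounds(1), rule J_bounds(2))
  show ?thesis by (rule abs_leI) (use a b in linarith)+
qed

definition Rf :: "nat \<Rightarrow> nat \<Rightarrow> 'v list pmf \<Rightarrow> ('x list \<Rightarrow> 'y list pmf) \<Rightarrow> ('v list \<Rightarrow> 'u::ab_group_add list) pmf \<Rightarrow> ('v list \<Rightarrow> 'u list \<Rightarrow> 'x list)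
  \<Rightarrow> 'v list \<Rightarrow> 'u list \<Rightarrow> 'y list \<Rightarrow> real" where
  "Rf n l PV W F q v u y = measure_pmf.expectation F (\<lambda>f.
     (\<Sum>s\<in>{s. s permutes {..<n}}. \<Sum>t\<in>{t. t permutes {..<l}}. IND n PV W q f s t v u y) / (fact n * fact l))"

lemma Rf_bounds: "0 \<le> Rf n l PV W F q v u y" "Rf n l PV W F q v u y \<le> 1"
  unfolding Rf_def by (rule exp_bounds01(1), rule J_bounds(1), rule J_bounds(2),
     rule exp_bounds01(2), rule J_bounds(1), rule J_bounds(2))

lemma step_int:
  fixes F :: "('v::{finite,ab_group_add} list \<Rightarrow> 'u::{finite,ab_group_add} list) pmf"
    and PV :: "'v list pmf" and W :: "'x list \<Rightarrow> 'y list pmf"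
  assumes lin: "random_linear_code n l F" and PVsub: "set_pmf PV \<subseteq> seqs n"
  shows "avg_err n l PV W F q \<le> (\<Sum>v\<in>seqs n. pmf PV v * (\<Sum>u\<in>seqs l.
      measure_pmf.expectation (W (q v u)) (\<lambda>y. Rf n l PV W F q v u y))) / real (card (seqs l :: 'u list set))"
proof -
  let ?J = "\<lambda>f v u y. (\<Sum>s\<in>{s. s permutes {..<n}}. \<Sum>t\<in>{t. t permutes {..<l}}. IND n PV W q f s t v u y) / (fact n * fact l)"
  have intJ: "integrable (measure_pmf p) (\<lambda>y. ?J f v u y)" for p f v u
    by (rule integrable_pmf_bounded[where C=1], rule J_abs)
  have intEJ: "integrable (measure_pmf F) (\<lambda>f. measure_pmf.expectation (W (q v u)) (\<lambda>y. ?J f v u y))" for v u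
    by (rule integrable_pmf_bounded[where C=1], rule EJ_abs)
  have intO: "integrable (measure_pmf F) (\<lambda>f. opt_err PV W (\<lambda>v. q v (vadd (permute_list t (f (permute_list s v))) ub)))" for s t ub
    by (rule integrable_pmf_bounded[where C=1]) (metis abs_of_nonneg opt_err_bounds)
  have "avg_err n l PV W F q = measure_pmf.expectation F (\<lambda>f.
     (\<Sum>s\<in>{s. s permutes {..<n}}. \<Sum>t\<in>{t. t permutes {..<l}}. \<Sum>ub\<in>seqs l.
        opt_err PV W (\<lambda>v. q v (vadd (permute_list t (f (permute_list s v))) ub)))
     / (fact n * fact l * real (card (seqs l :: 'u list set))))"
    by (rule avg_err_formula)
  also have "\<dots> \<le> measure_pmf.expectation F (\<lambda>f.
     (\<Sum>v\<in>seqs n. pmf PV v * (\<Sum>u\<in>seqs l. measure_pmf.expectation (W (q v u)) (\<lambda>y. ?J f v u y)))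
     / real (card (seqs l :: 'u list set)))"
  proof (rule integral_mono_AE)
    show "AE f in measure_pmf F. (\<Sum>s\<in>{s. s permutes {..<n}}. \<Sum>t\<in>{t. t permutes {..<l}}. \<Sum>ub\<in>seqs l.
        opt_err PV W (\<lambda>v. q v (vadd (permute_list t (f (permute_list s v))) ub)))
     / (fact n * fact l * real (card (seqs l :: 'u list set))) \<le>
     (\<Sum>v\<in>seqs n. pmf PV v * (\<Sum>u\<in>seqs l. measure_pmf.expectation (W (q v u)) (\<lambda>y. ?J f v u y)))
     / real (card (seqs l :: 'u list set))"
    proof (rule AE_pmfI)
      fix f assume "f \<in> set_pmf F"
      then have "is_linear_map n l f" using lin unfolding random_linear_code_def by blast
      then show "(\<Sum>s\<in>{s. s permutes {..<n}}. \<Sum>t\<in>{t. t permutes {..<l}}. \<Sum>ub\<in>seqs l.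
        opt_err PV W (\<lambda>v. q v (vadd (permute_list t (f (permute_list s v))) ub)))
     / (fact n * fact l * real (card (seqs l :: 'u list set))) \<le>
     (\<Sum>v\<in>seqs n. pmf PV v * (\<Sum>u\<in>seqs l. measure_pmf.expectation (W (q v u)) (\<lambda>y. ?J f v u y)))
     / real (card (seqs l :: 'u list set))"
        by (rule step_f[OF _ PVsub])
    qed
  qed (use intO intEJ in auto)
  also have "\<dots> = (\<Sum>v\<in>seqs n. pmf PV v * (\<Sum>u\<in>seqs l.
       measure_pmf.expectation F (\<lambda>f. measure_pmf.expectation (W (q v u)) (\<lambda>y. ?J f v u y))))
     / real (card (seqs l :: 'u list set))"
    using intEJ by (simp add: integral_sum)
  also have "\<dots> = (\<Sum>v\<in>seqs n. pmf PV v * (\<Sum>u\<in>seqs l.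
      measure_pmf.expectation (W (q v u)) (\<lambda>y. Rf n l PV W F q v u y))) / real (card (seqs l :: 'u list set))"
  proof -
    have "measure_pmf.expectation F (\<lambda>f. measure_pmf.expectation (W (q v u)) (\<lambda>y. ?J f v u y)) =
          measure_pmf.expectation (W (q v u)) (\<lambda>y. Rf n l PV W F q v u y)" for v u
      unfolding Rf_def by (rule fubini_pmf[where B=1], rule J_abs)
    then show ?thesis by simp
  qed
  finally show ?thesis .
qed

lemma amap_vsub:
  assumes lin: "is_linear_map n l f" and s: "s permutes {..<n}" and t: "t permutes {..<l}"
    and x: "x \<in> seqs n" and y: "y \<in> seqs n"
  shows "amap f s t (vsub x y) = vsub (amap f s t x) (amap f s t y)"
proof -
  have "permute_list s (vsub x y) = vsub (permute_list s x) (permute_list s y)"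
    by (rule permute_vsub) (use s x y in auto)
  moreover have "f (vsub (permute_list s x) (permute_list s y)) = vsub (f (permute_list s x)) (f (permute_list s y))"
    by (rule lin_vsub[OF lin]) (use x y in auto)
  moreover have "permute_list t (vsub (f (permute_list s x)) (f (permute_list s y))) =
      vsub (permute_list t (f (permute_list s x))) (permute_list t (f (permute_list s y)))"
    by (rule permute_vsub) (use t x y lin_in[OF lin, of "permute_list s x"] lin_in[OF lin, of "permute_list s y"] in auto)
  ultimately show ?thesis unfolding amap_def by simp
qed

lemma IND_le:
  fixes f :: "'v::{finite,ab_group_add} list \<Rightarrow> 'u::{finite,ab_group_add} list"
  assumes lin: "is_linear_map n l f" and s: "s permutes {..<n}" and t: "t permutes {..<l}"
    and v: "v \<in> seqs n" and u: "u \<in> seqs l"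
  shows "IND n PV W q f s t v u y \<le> (\<Sum>v'\<in>seqs n - {v}. \<Sum>u'\<in>seqs l.
     of_bool (pmf PV v * pmf (W (q v u)) y \<le> pmf PV v' * pmf (W (q v' u')) y) *
     of_bool (amap f s t (vsub v v') = vsub u u'))"
proof (cases "\<exists>v'\<in>seqs n. v' \<noteq> v \<and> pmf PV v * pmf (W (q v u)) y \<le>
      pmf PV v' * pmf (W (q v' (vadd (amap f s t v') (vsub u (amap f s t v))))) y")
  case True
  then obtain v' where v': "v' \<in> seqs n" "v' \<noteq> v" "pmf PV v * pmf (W (q v u)) y \<le>
      pmf PV v' * pmf (W (q v' (vadd (amap f s t v') (vsub u (amap f s t v))))) y" by blast
  define u' where "u' = vadd (amap f s t v') (vsub u (amap f s t v))"
  have av: "amap f s t v \<in> seqs l" "amap f s t v' \<in> seqs l" using amap_in[OF lin] v v'(1) by auto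
  have u': "u' \<in> seqs l" using av u unfolding u'_def by simp
  have eq: "amap f s t (vsub v v') = vsub u u'"
    unfolding u'_def amap_vsub[OF lin s t v v'(1)]
    by (rule vsub_vadd_vsub[symmetric]) (use av u in auto)
  let ?g = "\<lambda>v' u'. of_bool (pmf PV v * pmf (W (q v u)) y \<le> pmf PV v' * pmf (W (q v' u')) y) *
     of_bool (amap f s t (vsub v v') = vsub u u') :: real"
  have one: "?g v' u' = 1" using v'(3) eq unfolding u'_def by simp
  have le1: "?g v' u' \<le> (\<Sum>u''\<in>seqs l. ?g v' u'')"
    by (rule member_le_sum) (use u' in auto)
  have le2: "(\<Sum>u''\<in>seqs l. ?g v' u'') \<le> (\<Sum>v''\<in>seqs n - {v}. \<Sum>u''\<in>seqs l. ?g v'' u'')"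
    by (rule member_le_sum[where f="\<lambda>v''. \<Sum>u''\<in>seqs l. ?g v'' u''"]) (use v' in \<open>auto intro: sum_nonneg\<close>)
  have "1 \<le> (\<Sum>v''\<in>seqs n - {v}. \<Sum>u''\<in>seqs l. ?g v'' u'')" using one le1 le2 by linarith
  moreover have "IND n PV W q f s t v u y = 1" using True by (simp add: IND_def)
  ultimately show ?thesis by linarith
next
  case False
  then have "IND n PV W q f s t v u y = 0" by (simp add: IND_def)
  moreover have "0 \<le> (\<Sum>v'\<in>seqs n - {v}. \<Sum>u'\<in>seqs l.
     of_bool (pmf PV v * pmf (W (q v u)) y \<le> pmf PV v' * pmf (W (q v' u')) y) *
     (of_bool (amap f s t (vsub v v') = vsub u u') :: real))"
    by (intro sum_nonneg) auto
  ultimately show ?thesis by linarith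
qed

lemma swap4: "(\<Sum>s\<in>A. \<Sum>t\<in>B. \<Sum>v\<in>C. \<Sum>u\<in>D. c v u * X s t v u) =
   (\<Sum>v\<in>C. \<Sum>u\<in>D. c v u * (\<Sum>s\<in>A. \<Sum>t\<in>B. X s t v u :: real))"
proof -
  have "(\<Sum>s\<in>A. \<Sum>t\<in>B. \<Sum>v\<in>C. \<Sum>u\<in>D. c v u * X s t v u) = (\<Sum>s\<in>A. \<Sum>v\<in>C. \<Sum>u\<in>D. \<Sum>t\<in>B. c v u * X s t v u)"
    by (rule sum.cong[OF refl], rule swap2)
  also have "\<dots> = (\<Sum>v\<in>C. \<Sum>u\<in>D. \<Sum>s\<in>A. \<Sum>t\<in>B. c v u * X s t v u)"
    by (rule swap2)
  also have "\<dots> = (\<Sum>v\<in>C. \<Sum>u\<in>D. c v u * (\<Sum>s\<in>A. \<Sum>t\<in>B. X s t v u))"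
    by (simp add: sum_distrib_left)
  finally show ?thesis .
qed

lemma R_le_T:
  fixes F :: "('v::{finite,ab_group_add} list \<Rightarrow> 'u::{finite,ab_group_add} list) pmf"
    and q :: "'v list \<Rightarrow> 'u list \<Rightarrow> 'x list"
  assumes lin: "random_linear_code n l F" and n: "n \<ge> 1" and l: "l \<ge> 1"
    and v: "v \<in> seqs n" and u: "u \<in> seqs l"
  shows "Rf n l PV W F q v u y \<le> (\<Sum>v'\<in>seqs n - {v}. \<Sum>u'\<in>seqs l.
     of_bool (pmf PV v * pmf (W (q v u)) y \<le> pmf PV v' * pmf (W (q v' u')) y) *
     (alpha n l F (type_of (vsub v v')) (type_of (vsub u u')) / real CARD('u) ^ l))"
proof -
  let ?c = "\<lambda>v' u'. of_bool (pmf PV v * pmf (W (q v u)) y \<le> pmf PV v' * pmf (W (q v' u')) y) :: real"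
  let ?Z = "\<lambda>f v' u'. (\<Sum>s\<in>{s. s permutes {..<n}}. \<Sum>t\<in>{t. t permutes {..<l}}.
       of_bool (permute_list t (f (permute_list s (vsub v v'))) = vsub u u')) / (fact n * fact l) :: real"
  have "Rf n l PV W F q v u y \<le> measure_pmf.expectation F (\<lambda>f. \<Sum>v'\<in>seqs n - {v}. \<Sum>u'\<in>seqs l. ?c v' u' * ?Z f v' u')"
    unfolding Rf_def
  proof (rule integral_mono_AE)
    show "integrable (measure_pmf F) (\<lambda>f. (\<Sum>s\<in>{s. s permutes {..<n}}. \<Sum>t\<in>{t. t permutes {..<l}}. IND n PV W q f s t v u y) / (fact n * fact l))"
      by (rule integrable_pmf_bounded[where C=1], rule J_abs)
    show "integrable (measure_pmf F) (\<lambda>f. \<Sum>v'\<in>seqs n - {v}. \<Sum>u'\<in>seqs l. ?c v' u' * ?Z f v' u')"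
      by simp
    show "AE f in measure_pmf F. (\<Sum>s\<in>{s. s permutes {..<n}}. \<Sum>t\<in>{t. t permutes {..<l}}. IND n PV W q f s t v u y) / (fact n * fact l)
         \<le> (\<Sum>v'\<in>seqs n - {v}. \<Sum>u'\<in>seqs l. ?c v' u' * ?Z f v' u')"
    proof (rule AE_pmfI)
      fix f assume "f \<in> set_pmf F"
      then have linf: "is_linear_map n l f" using lin unfolding random_linear_code_def by blast
      have "(\<Sum>s\<in>{s. s permutes {..<n}}. \<Sum>t\<in>{t. t permutes {..<l}}. IND n PV W q f s t v u y)
         \<le> (\<Sum>s\<in>{s. s permutes {..<n}}. \<Sum>t\<in>{t. t permutes {..<l}}. \<Sum>v'\<in>seqs n - {v}. \<Sum>u'\<in>seqs l.
             ?c v' u' * of_bool (amap f s t (vsub v v') = vsub u u'))"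
        by (intro sum_mono IND_le[OF linf _ _ v u]) auto
      also have "\<dots> = (\<Sum>v'\<in>seqs n - {v}. \<Sum>u'\<in>seqs l. ?c v' u' *
          (\<Sum>s\<in>{s. s permutes {..<n}}. \<Sum>t\<in>{t. t permutes {..<l}}. of_bool (amap f s t (vsub v v') = vsub u u')))"
        by (rule swap4)
      also have "\<dots> = (\<Sum>v'\<in>seqs n - {v}. \<Sum>u'\<in>seqs l. ?c v' u' * ?Z f v' u') * (fact n * fact l)"
        by (simp add: sum_distrib_right amap_def)
      finally show "(\<Sum>s\<in>{s. s permutes {..<n}}. \<Sum>t\<in>{t. t permutes {..<l}}. IND n PV W q f s t v u y) / (fact n * fact l)
         \<le> (\<Sum>v'\<in>seqs n - {v}. \<Sum>u'\<in>seqs l. ?c v' u' * ?Z f v' u')"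
        by (simp add: divide_le_eq)
    qed
  qed
  also have "\<dots> = (\<Sum>v'\<in>seqs n - {v}. \<Sum>u'\<in>seqs l. ?c v' u' * measure_pmf.expectation F (\<lambda>f. ?Z f v' u'))"
    by simp
  also have "\<dots> = (\<Sum>v'\<in>seqs n - {v}. \<Sum>u'\<in>seqs l. ?c v' u' *
     (alpha n l F (type_of (vsub v v')) (type_of (vsub u u')) / real CARD('u) ^ l))"
  proof (intro sum.cong refl)
    fix v' :: "'v list" and u' :: "'u list" assume v': "v' \<in> seqs n - {v}" and u': "u' \<in> seqs l"
    have "measure_pmf.expectation F (\<lambda>f. ?Z f v' u') = alpha n l F (type_of (vsub v v')) (type_of (vsub u u')) / real CARD('u) ^ l"
      by (rule prob_a[OF lin n l]) (use v v' u u' in auto)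
    then show "?c v' u' * measure_pmf.expectation F (\<lambda>f. ?Z f v' u') = ?c v' u' *
     (alpha n l F (type_of (vsub v v')) (type_of (vsub u u')) / real CARD('u) ^ l)" by simp
  qed
  finally show ?thesis .
qed

lemma eln_pos: "x > 0 \<Longrightarrow> eln x = ereal (ln x)" by (simp add: eln_def)

lemma aux_mult: "(S::real) * (a * b / K) = a * b * (S / K)" by (simp add: mult_ac)

lemma notE_bound:
  fixes a P p b g :: real and n :: nat
  assumes pos: "a > 0" "P > 0" "p > 0" "b > 0" "n \<ge> 1"
    and nE: "\<not> (ereal (1 / real n) * eln (a / P) \<le> ereal (1 / real n) * eln (1 / p) + ereal (1 / real n) * eln b + ereal g)"
  shows "b * P < a * p * exp (- real n * g)"
proof -
  have "\<not> (ln (a / P) / n \<le> ln (1 / p) / n + ln b / n + g)"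
    using nE pos by (simp add: eln_pos)
  then have "ln (a / P) / n > ln (1 / p) / n + ln b / n + g" by simp
  moreover have np: "real n > 0" using pos by simp
  ultimately have "n * (ln (1 / p) / n + ln b / n + g) < n * (ln (a / P) / n)"
    by (intro mult_strict_left_mono) auto
  then have "ln (a / P) > ln (1 / p) + ln b + n * g"
    using np by (simp add: distrib_left)
  moreover have "ln (1 / p) + ln b + n * g = ln (b * exp (n * g) / p)"
    using pos by (simp add: ln_mult ln_div)
  ultimately have "ln (a / P) > ln (b * exp (n * g) / p)" by simp
  then have "a / P > b * exp (n * g) / p" using pos by (simp add: ln_less_cancel_iff)
  then have h: "b * P * exp (n * g) < a * p" using pos by (simp add: field_simps)
  have e1: "exp (n * g) * exp (- real n * g) = 1" by (simp add: exp_add[symmetric])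
  have "b * P = b * P * (exp (n * g) * exp (- real n * g))" by (simp only: e1 mult_1_right)
  also have "\<dots> = (b * P * exp (n * g)) * exp (- real n * g)" by (simp only: mult.assoc)
  also have "\<dots> < a * p * exp (- real n * g)" by (rule mult_strict_right_mono[OF h]) simp
  finally show ?thesis .
qed

lemma core:
  fixes F :: "('v::{finite,ab_group_add} list \<Rightarrow> 'u::{finite,ab_group_add} list) pmf"
    and q :: "'v list \<Rightarrow> 'u list \<Rightarrow> 'x list" and PV :: "'v list pmf" and W :: "'x list \<Rightarrow> 'y list pmf"
  assumes lin: "random_linear_code n l F" and n: "n \<ge> 1" and l: "l \<ge> 1"
    and v: "v \<in> seqs n" and pv: "pmf PV v > 0" and wy: "pmf (W x) y > 0"
    and u0: "u0 \<in> seqs l" "q v u0 = x"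
    and PY: "PY = (\<Sum>v'\<in>seqs n. pmf PV v' * (\<Sum>u'\<in>seqs l. pmf (W (q v' u')) y)) / real (card (seqs l :: 'u list set))"
  shows "(\<Sum>u\<in>qinv l q v x. Rf n l PV W F q v u y) \<le> real (card (qinv l q v x)) *
     (of_bool (ereal (1 / real n) * eln (pmf (W x) y / PY) \<le> ereal (1 / real n) * eln (1 / pmf PV v)
        + ereal (1 / real n) * eln (beta' n l F q v x) + ereal g) + exp (- real n * g))"
proof -
  let ?Q = "qinv l q v x"
  let ?K = "real (card (seqs l :: 'u list set))"
  let ?b = "beta' n l F q v x"
  let ?cz = "pmf PV v * pmf (W x) y"
  let ?c = "\<lambda>v' u'. of_bool (?cz \<le> pmf PV v' * pmf (W (q v' u')) y) :: real"
  let ?al = "\<lambda>u v' u'. alpha n l F (type_of (vsub v v')) (type_of (vsub u u'))"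
  let ?e = "exp (- real n * g)"
  have Kpos: "?K > 0" using seqs_ne[of l] by (simp add: card_gt_0_iff)
  have finQ: "finite ?Q" unfolding qinv_def by (rule finite_subset[OF _ seqs_finite[of l]]) auto
  have Qsub: "?Q \<subseteq> seqs l" unfolding qinv_def by auto
  have u0Q: "u0 \<in> ?Q" using u0 unfolding qinv_def by simp
  have cardQ: "card ?Q > 0" using finQ u0Q by (auto simp: card_gt_0_iff)
  have e0: "?e > 0" by simp
  have czpos: "?cz > 0" using pv wy by simp
  show ?thesis
  proof (cases "ereal (1 / real n) * eln (pmf (W x) y / PY) \<le> ereal (1 / real n) * eln (1 / pmf PV v)
        + ereal (1 / real n) * eln ?b + ereal g")
    case True
    have "(\<Sum>u\<in>?Q. Rf n l PV W F q v u y) \<le> (\<Sum>u\<in>?Q. 1)"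
      by (intro sum_mono Rf_bounds)
    also have "\<dots> = real (card ?Q) * 1" by simp
    also have "\<dots> \<le> real (card ?Q) * (1 + ?e)" by (rule mult_left_mono) (use e0 in auto)
    finally show ?thesis using True by simp
  next
    case False
    have "(\<Sum>u\<in>?Q. Rf n l PV W F q v u y) \<le>
       (\<Sum>u\<in>?Q. \<Sum>v'\<in>seqs n - {v}. \<Sum>u'\<in>seqs l. ?c v' u' * (?al u v' u' / real CARD('u) ^ l))"
    proof (rule sum_mono)
      fix u assume u: "u \<in> ?Q"
      then have uL: "u \<in> seqs l" and qu: "q v u = x" unfolding qinv_def by auto
      show "Rf n l PV W F q v u y \<le> (\<Sum>v'\<in>seqs n - {v}. \<Sum>u'\<in>seqs l. ?c v' u' * (?al u v' u' / real CARD('u) ^ l))"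
        using R_le_T[OF lin n l v uL, of PV W q y] qu by simp
    qed
    also have "\<dots> = (\<Sum>v'\<in>seqs n - {v}. \<Sum>u'\<in>seqs l. ?c v' u' * ((\<Sum>u\<in>?Q. ?al u v' u') / ?K))"
    proof -
      have "(\<Sum>u\<in>?Q. \<Sum>v'\<in>seqs n - {v}. \<Sum>u'\<in>seqs l. ?c v' u' * (?al u v' u' / real CARD('u) ^ l)) =
         (\<Sum>v'\<in>seqs n - {v}. \<Sum>u'\<in>seqs l. \<Sum>u\<in>?Q. ?c v' u' * (?al u v' u' / real CARD('u) ^ l))"
        by (rule swap2)
      also have "\<dots> = (\<Sum>v'\<in>seqs n - {v}. \<Sum>u'\<in>seqs l. ?c v' u' * ((\<Sum>u\<in>?Q. ?al u v' u') / ?K))"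
        by (simp add: sum_distrib_left sum_divide_distrib card_seqs)
      finally show ?thesis .
    qed
    also have "\<dots> \<le> (\<Sum>v'\<in>seqs n - {v}. \<Sum>u'\<in>seqs l. ?c v' u' * (real (card ?Q) * ?b / ?K))"
    proof (intro sum_mono mult_left_mono divide_right_mono)
      fix v' :: "'v list" and u' :: "'u list" assume v': "v' \<in> seqs n - {v}" and u': "u' \<in> seqs l"
      let ?P = "type_of (vsub v v')"
      have Pin: "(?P, u') \<in> (types n - {type_of (replicate n (0::'v))}) \<times> seqs l"
      proof -
        have vv: "vsub v v' \<in> seqs n" using v v' by simp
        have "vsub v v' \<noteq> replicate n 0" using vsub_nonzero[of v v'] v v' by (auto simp: eq_commute)
        moreover have "mset (vsub v v') = mset (replicate n (0::'v)) \<Longrightarrow> vsub v v' = replicate n 0"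
        proof -
          assume m: "mset (vsub v v') = mset (replicate n (0::'v))"
          have "set (vsub v v') \<subseteq> {0}"
            using arg_cong[OF m, of set_mset] by (auto split: if_splits)
          then show "vsub v v' = replicate n 0" using vv by (intro replicate_eqI) auto
        qed
        ultimately have "?P \<noteq> type_of (replicate n (0::'v))"
          using type_eq_iff[of "vsub v v'" "replicate n (0::'v)"] vv n by auto
        moreover have "?P \<in> types n" using vv unfolding types_def by blast
        ultimately show ?thesis using u' by blast
      qed
      have fin: "finite ((types n - {type_of (replicate n (0::'v))}) \<times> (seqs l :: 'u list set))"
        unfolding types_def by simp
      have "(\<Sum>u2\<in>?Q. alpha n l F ?P (type_of (vsub u2 u')) / real (card ?Q)) \<le> ?b"
        unfolding beta'_def
        by (rule Max_ge) (use fin Pin in \<open>auto intro!: image_eqI[where x="(?P, u')"]\<close>)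
      then have "(\<Sum>u2\<in>?Q. alpha n l F ?P (type_of (vsub u2 u'))) / real (card ?Q) \<le> ?b"
        by (simp add: sum_divide_distrib)
      then show "(\<Sum>u\<in>?Q. ?al u v' u') \<le> real (card ?Q) * ?b"
        using cardQ by (simp add: divide_le_eq mult.commute)
    qed (use Kpos in auto)
    also have "\<dots> = (\<Sum>v'\<in>seqs n - {v}. \<Sum>u'\<in>seqs l. ?c v' u') * (real (card ?Q) * ?b / ?K)"
      by (simp only: sum_distrib_right)
    also have "\<dots> = real (card ?Q) * ?b * ((\<Sum>v'\<in>seqs n - {v}. \<Sum>u'\<in>seqs l. ?c v' u') / ?K)"
      by (rule aux_mult)
    also have "\<dots> \<le> real (card ?Q) * ?e"
    proof -
      define A where "A = (\<Sum>v'\<in>seqs n - {v}. \<Sum>u'\<in>seqs l. ?c v' u') / ?K"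
      have A0: "A \<ge> 0" unfolding A_def using Kpos by (simp add: sum_nonneg)
      have "?cz * A = (\<Sum>v'\<in>seqs n - {v}. \<Sum>u'\<in>seqs l. ?cz * ?c v' u') / ?K"
        unfolding A_def by (simp only: sum_distrib_left times_divide_eq_right)
      also have "\<dots> \<le> (\<Sum>v'\<in>seqs n - {v}. \<Sum>u'\<in>seqs l. pmf PV v' * pmf (W (q v' u')) y) / ?K"
        using Kpos by (intro divide_right_mono sum_mono) (auto simp: of_bool_def)
      also have "\<dots> \<le> (\<Sum>v'\<in>seqs n. \<Sum>u'\<in>seqs l. pmf PV v' * pmf (W (q v' u')) y) / ?K"
        using Kpos by (intro divide_right_mono sum_mono2) (auto intro: sum_nonneg)
      also have "\<dots> = PY" unfolding PY by (simp add: sum_distrib_left)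
      finally have cA: "?cz * A \<le> PY" .
      have PYpos: "PY > 0"
      proof -
        have "0 < pmf PV v * pmf (W (q v u0)) y" using pv wy u0 by simp
        also have "\<dots> \<le> pmf PV v * (\<Sum>u'\<in>seqs l. pmf (W (q v u')) y)"
          using u0 by (intro mult_left_mono member_le_sum) auto
        also have "\<dots> \<le> (\<Sum>v'\<in>seqs n. pmf PV v' * (\<Sum>u'\<in>seqs l. pmf (W (q v' u')) y))"
          using v by (intro member_le_sum[where f="\<lambda>v'. pmf PV v' * (\<Sum>u'\<in>seqs l. pmf (W (q v' u')) y)"])
             (auto intro!: mult_nonneg_nonneg sum_nonneg)
        finally show ?thesis unfolding PY using Kpos by simp
      qed
      show ?thesis
      proof (cases "?b > 0")
        case False
        then have "real (card ?Q) * ?b \<le> 0" by (intro mult_nonneg_nonpos) auto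
        then have "real (card ?Q) * ?b * A \<le> 0" by (rule mult_nonpos_nonneg[OF _ A0])
        then have "real (card ?Q) * ?b * A \<le> real (card ?Q) * ?e"
          using mult_nonneg_nonneg[of "real (card ?Q)" ?e] e0 by linarith
        then show ?thesis unfolding A_def[symmetric] .
      next
        case True
        have nb: "?b * PY < pmf (W x) y * pmf PV v * ?e"
          by (rule notE_bound) (use wy PYpos pv True n False in auto)
        have h0: "?b * (?cz * A) \<le> ?b * PY" by (rule mult_left_mono[OF cA]) (use True in simp)
        have h0': "?b * (?cz * A) \<le> pmf (W x) y * pmf PV v * ?e" using h0 nb by linarith
        have h1: "?cz * (?b * A) \<le> ?cz * ?e" using h0' by (simp add: mult_ac)
        then have "?b * A \<le> ?e" using czpos by (simp add: mult_le_cancel_left_pos)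
        then have "real (card ?Q) * (?b * A) \<le> real (card ?Q) * ?e" by (rule mult_left_mono) simp
        then show ?thesis unfolding A_def[symmetric] by (simp add: mult.assoc)
      qed
    qed
    also have "\<dots> \<le> real (card ?Q) * (of_bool (ereal (1 / real n) * eln (pmf (W x) y / PY) \<le> ereal (1 / real n) * eln (1 / pmf PV v)
        + ereal (1 / real n) * eln ?b + ereal g) + ?e)" using False by simp
    finally show ?thesis .
  qed
qed

lemma ind_iff: "indicator {(v, x, y). P v x y} (v, x, y) = (of_bool (P v x y) :: real)"
  by (simp add: indicator_def)

lemma PY_formula:
  fixes q :: "'v::finite list \<Rightarrow> 'u::finite list \<Rightarrow> 'x list" and W :: "'x list \<Rightarrow> 'y list pmf"
  assumes PVsub: "set_pmf PV \<subseteq> seqs n"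
  shows "pmf (map_pmf (\<lambda>(v, x, y). y) (joint_VXY l PV W q)) y =
    (\<Sum>v\<in>seqs n. pmf PV v * (\<Sum>u\<in>seqs l. pmf (W (q v u)) y)) / real (card (seqs l :: 'u list set))"
proof -
  let ?S = "(\<lambda>(v::'v list, x::'x list, y::'y list). y) -` {y}"
  have "pmf (map_pmf (\<lambda>(v, x, y). y) (joint_VXY l PV W q)) y = measure_pmf.expectation (joint_VXY l PV W q) (indicator ?S)"
    by (simp only: pmf_map prob_as_exp)
  also have "\<dots> = (\<Sum>v\<in>seqs n. pmf PV v * (\<Sum>u\<in>seqs l. measure_pmf.expectation (W (q v u)) (\<lambda>y'. indicator ?S (v, q v u, y'))))
      / real (card (seqs l :: 'u list set))"
    by (rule joint_exp[where B=1]) (use PVsub in \<open>auto simp: indicator_def\<close>)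
  also have "\<dots> = (\<Sum>v\<in>seqs n. pmf PV v * (\<Sum>u\<in>seqs l. pmf (W (q v u)) y)) / real (card (seqs l :: 'u list set))"
  proof -
    have "measure_pmf.expectation (W (q v u)) (\<lambda>y'. indicator ?S (v, q v u, y')) = pmf (W (q v u)) y" for v u
    proof -
      have "(\<lambda>y'. indicator ?S (v, q v u, y') :: real) = indicator {y}" by (auto simp: indicator_def)
      then show ?thesis by (simp add: prob_as_exp[symmetric] measure_pmf_single)
    qed
    then show ?thesis by simp
  qed
  finally show ?thesis .
qed

lemma per_v:
  fixes F :: "('v::{finite,ab_group_add} list \<Rightarrow> 'u::{finite,ab_group_add} list) pmf"
    and q :: "'v list \<Rightarrow> 'u list \<Rightarrow> 'x list" and PV :: "'v list pmf" and W :: "'x list \<Rightarrow> 'y list pmf"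
  assumes lin: "random_linear_code n l F" and n: "n \<ge> 1" and l: "l \<ge> 1" and v: "v \<in> seqs n"
    and PY: "\<And>y. PYf y = (\<Sum>v'\<in>seqs n. pmf PV v' * (\<Sum>u'\<in>seqs l. pmf (W (q v' u')) y)) / real (card (seqs l :: 'u list set))"
    and Eiff: "\<And>x y. indicator Eset (v, x, y) = (of_bool (ereal (1 / real n) * eln (pmf (W x) y / PYf y) \<le> ereal (1 / real n) * eln (1 / pmf PV v)
        + ereal (1 / real n) * eln (beta' n l F q v x) + ereal g) :: real)"
  shows "pmf PV v * (\<Sum>u\<in>seqs l. measure_pmf.expectation (W (q v u)) (\<lambda>y. Rf n l PV W F q v u y))
      \<le> pmf PV v * (\<Sum>u\<in>seqs l. measure_pmf.expectation (W (q v u)) (\<lambda>y. indicator Eset (v, q v u, y) + exp (- real n * g)))"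
proof (cases "pmf PV v = 0")
  case True then show ?thesis by simp
next
  case False
  then have pv: "pmf PV v > 0" using pmf_nonneg[of PV v] by linarith
  let ?e = "exp (- real n * g)"
  have intR: "integrable (measure_pmf p) (\<lambda>y. Rf n l PV W F q v u y)" for p u
    by (rule integrable_pmf_bounded[where C=1]) (metis Rf_bounds abs_of_nonneg)
  have intI: "integrable (measure_pmf p) (\<lambda>y. indicator Eset (v, x, y) + ?e :: real)" for p x
    by (rule integrable_pmf_bounded[where C="1 + ?e"]) (auto simp: indicator_def)
  have finL: "finite (seqs l :: 'u list set)" by simp
  have "(\<Sum>u\<in>seqs l. measure_pmf.expectation (W (q v u)) (\<lambda>y. Rf n l PV W F q v u y))
     = (\<Sum>x\<in>q v ` seqs l. \<Sum>u\<in>{u\<in>seqs l. q v u = x}. measure_pmf.expectation (W (q v u)) (\<lambda>y. Rf n l PV W F q v u y))"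
    by (rule sum.group[symmetric]) auto
  also have "\<dots> \<le> (\<Sum>x\<in>q v ` seqs l. \<Sum>u\<in>{u\<in>seqs l. q v u = x}. measure_pmf.expectation (W (q v u)) (\<lambda>y. indicator Eset (v, q v u, y) + ?e))"
  proof (rule sum_mono)
    fix x assume x: "x \<in> q v ` seqs l"
    then obtain u0 where u0: "u0 \<in> seqs l" "q v u0 = x" by blast
    have Qeq: "{u\<in>seqs l. q v u = x} = qinv l q v x" by (simp add: qinv_def)
    have finQ: "finite (qinv l q v x)" unfolding qinv_def by (rule finite_subset[OF _ seqs_finite[of l]]) auto
    have "(\<Sum>u\<in>{u\<in>seqs l. q v u = x}. measure_pmf.expectation (W (q v u)) (\<lambda>y. Rf n l PV W F q v u y))
        = (\<Sum>u\<in>qinv l q v x. measure_pmf.expectation (W x) (\<lambda>y. Rf n l PV W F q v u y))"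
      unfolding Qeq by (rule sum.cong) (auto simp: qinv_def)
    also have "\<dots> = measure_pmf.expectation (W x) (\<lambda>y. \<Sum>u\<in>qinv l q v x. Rf n l PV W F q v u y)"
      by (rule Bochner_Integration.integral_sum[symmetric]) (rule intR)
    also have "\<dots> \<le> measure_pmf.expectation (W x) (\<lambda>y. real (card (qinv l q v x)) * (indicator Eset (v, x, y) + ?e))"
    proof (rule integral_mono_AE)
      show "integrable (measure_pmf (W x)) (\<lambda>y. \<Sum>u\<in>qinv l q v x. Rf n l PV W F q v u y)"
        using intR by simp
      show "integrable (measure_pmf (W x)) (\<lambda>y. real (card (qinv l q v x)) * (indicator Eset (v, x, y) + ?e))"
        using intI by simp
      show "AE y in measure_pmf (W x). (\<Sum>u\<in>qinv l q v x. Rf n l PV W F q v u y) \<le> real (card (qinv l q v x)) * (indicator Eset (v, x, y) + ?e)"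
      proof (rule AE_pmfI)
        fix y assume "y \<in> set_pmf (W x)"
        then have wy: "pmf (W x) y > 0" using pmf_nonneg[of "W x" y] by (simp add: set_pmf_iff)
        show "(\<Sum>u\<in>qinv l q v x. Rf n l PV W F q v u y) \<le> real (card (qinv l q v x)) * (indicator Eset (v, x, y) + ?e)"
          unfolding Eiff by (rule core[OF lin n l v pv wy u0 PY])
      qed
    qed
    also have "\<dots> = (\<Sum>u\<in>qinv l q v x. measure_pmf.expectation (W x) (\<lambda>y. indicator Eset (v, x, y) + ?e))"
      by simp
    also have "\<dots> = (\<Sum>u\<in>{u\<in>seqs l. q v u = x}. measure_pmf.expectation (W (q v u)) (\<lambda>y. indicator Eset (v, q v u, y) + ?e))"
      unfolding Qeq by (rule sum.cong) (auto simp: qinv_def)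
    finally show "(\<Sum>u\<in>{u\<in>seqs l. q v u = x}. measure_pmf.expectation (W (q v u)) (\<lambda>y. Rf n l PV W F q v u y))
        \<le> (\<Sum>u\<in>{u\<in>seqs l. q v u = x}. measure_pmf.expectation (W (q v u)) (\<lambda>y. indicator Eset (v, q v u, y) + ?e))" .
  qed
  also have "\<dots> = (\<Sum>u\<in>seqs l. measure_pmf.expectation (W (q v u)) (\<lambda>y. indicator Eset (v, q v u, y) + ?e))"
    by (rule sum.group) auto
  finally show ?thesis using pv by (intro mult_left_mono) auto
qed

lemma final_alg:
  fixes p :: "'a \<Rightarrow> real" and a :: "'a \<Rightarrow> 'b \<Rightarrow> real"
  shows "(\<Sum>v\<in>N. p v * (\<Sum>u\<in>L. a v u + e)) = (\<Sum>v\<in>N. p v * (\<Sum>u\<in>L. a v u)) + real (card L) * e * (\<Sum>v\<in>N. p v)"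
proof -
  have "(\<Sum>u\<in>L. a v u + e) = (\<Sum>u\<in>L. a v u) + real (card L) * e" for v by (simp add: sum.distrib)
  then have "(\<Sum>v\<in>N. p v * (\<Sum>u\<in>L. a v u + e)) = (\<Sum>v\<in>N. p v * (\<Sum>u\<in>L. a v u) + real (card L) * e * p v)"
    by (simp add: distrib_left mult.commute)
  also have "\<dots> = (\<Sum>v\<in>N. p v * (\<Sum>u\<in>L. a v u)) + real (card L) * e * (\<Sum>v\<in>N. p v)"
    by (simp add: sum.distrib sum_distrib_left)
  finally show ?thesis .
qed

theorem lemma2:
  fixes n l m :: nat
    and PV :: "'v::{finite,ab_group_add} list pmf"
    and W :: "'x list \<Rightarrow> 'y list pmf"
    and F :: "('v list \<Rightarrow> 'u::{finite,ab_group_add} list) pmf"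
    and q :: "'v list \<Rightarrow> 'u list \<Rightarrow> 'x list"
    and \<gamma> :: real
  assumes "n \<ge> 1" and "l \<ge> 1" and "m \<ge> 1"
    and "set_pmf PV \<subseteq> seqs n"
    and "\<And>x. x \<in> seqs m \<Longrightarrow> set_pmf (W x) \<subseteq> seqs m"
    and "random_linear_code n l F"
    and "\<And>v u. v \<in> seqs n \<Longrightarrow> u \<in> seqs l \<Longrightarrow> q v u \<in> seqs m"
    and "\<gamma> > 0"
  shows "avg_err n l PV W F q \<le>
     measure_pmf.prob (joint_VXY l PV W q)
       {(v, x, y). ereal (1 / real n) * eln (pmf (W x) y / pmf (map_pmf (\<lambda>(v, x, y). y) (joint_VXY l PV W q)) y)
          \<le> ereal (1 / real n) * eln (1 / pmf PV v) + ereal (1 / real n) * eln (beta' n l F q v x) + ereal \<gamma>}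
     + exp (- real n * \<gamma>)"
proof -
  note n = assms(1) and l = assms(2) and PVsub = assms(4) and lin = assms(6)
  define Eset where "Eset = {(v, x, y). ereal (1 / real n) * eln (pmf (W x) y / pmf (map_pmf (\<lambda>(v, x, y). y) (joint_VXY l PV W q)) y)
          \<le> ereal (1 / real n) * eln (1 / pmf PV v) + ereal (1 / real n) * eln (beta' n l F q v x) + ereal \<gamma>}"
  define PYf where "PYf y = pmf (map_pmf (\<lambda>(v, x, y). y) (joint_VXY l PV W q)) y" for y
  let ?K = "real (card (seqs l :: 'u list set))"
  let ?e = "exp (- real n * \<gamma>)"
  have Kpos: "?K > 0" using seqs_ne[of l] by (simp add: card_gt_0_iff)
  have PY: "PYf y = (\<Sum>v'\<in>seqs n. pmf PV v' * (\<Sum>u'\<in>seqs l. pmf (W (q v' u')) y)) / ?K" for y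
    unfolding PYf_def by (rule PY_formula[OF PVsub])
  have Eiff: "indicator Eset (v, x, y) = (of_bool (ereal (1 / real n) * eln (pmf (W x) y / PYf y) \<le> ereal (1 / real n) * eln (1 / pmf PV v)
        + ereal (1 / real n) * eln (beta' n l F q v x) + ereal \<gamma>) :: real)" for v x y
    unfolding Eset_def PYf_def by (rule ind_iff)
  have intI: "integrable (measure_pmf p) (\<lambda>y. indicator Eset z :: real)" for p z by simp
  have "avg_err n l PV W F q \<le> (\<Sum>v\<in>seqs n. pmf PV v * (\<Sum>u\<in>seqs l.
      measure_pmf.expectation (W (q v u)) (\<lambda>y. Rf n l PV W F q v u y))) / ?K"
    by (rule step_int[OF lin PVsub])
  also have "\<dots> \<le> (\<Sum>v\<in>seqs n. pmf PV v * (\<Sum>u\<in>seqs l.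
      measure_pmf.expectation (W (q v u)) (\<lambda>y. indicator Eset (v, q v u, y) + ?e))) / ?K"
    using Kpos by (intro divide_right_mono sum_mono per_v[OF lin n l _ PY Eiff]) auto
  also have "\<dots> = (\<Sum>v\<in>seqs n. pmf PV v * (\<Sum>u\<in>seqs l.
      measure_pmf.expectation (W (q v u)) (\<lambda>y. indicator Eset (v, q v u, y)) + ?e)) / ?K"
  proof -
    have "measure_pmf.expectation (W (q v u)) (\<lambda>y. indicator Eset (v, q v u, y) + ?e) =
          measure_pmf.expectation (W (q v u)) (\<lambda>y. indicator Eset (v, q v u, y)) + ?e" for v u
    proof -
      have i1: "integrable (measure_pmf (W (q v u))) (\<lambda>y. indicator Eset (v, q v u, y) :: real)"
        by (rule integrable_pmf_bounded[where C=1]) (auto simp: indicator_def)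
      have "measure_pmf.expectation (W (q v u)) (\<lambda>y. indicator Eset (v, q v u, y) + ?e) =
          measure_pmf.expectation (W (q v u)) (\<lambda>y. indicator Eset (v, q v u, y)) + measure_pmf.expectation (W (q v u)) (\<lambda>y. ?e)"
        by (rule Bochner_Integration.integral_add[OF i1]) simp
      then show ?thesis by simp
    qed
    then show ?thesis by simp
  qed
  also have "\<dots> = (\<Sum>v\<in>seqs n. pmf PV v * (\<Sum>u\<in>seqs l.
      measure_pmf.expectation (W (q v u)) (\<lambda>y. indicator Eset (v, q v u, y)))) / ?K
      + ?e * (\<Sum>v\<in>seqs n. pmf PV v)"
  proof -
    have "(\<Sum>v\<in>seqs n. pmf PV v * (\<Sum>u\<in>seqs l.
      measure_pmf.expectation (W (q v u)) (\<lambda>y. indicator Eset (v, q v u, y)) + ?e)) =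
      (\<Sum>v\<in>seqs n. pmf PV v * (\<Sum>u\<in>seqs l.
      measure_pmf.expectation (W (q v u)) (\<lambda>y. indicator Eset (v, q v u, y)))) + ?K * ?e * (\<Sum>v\<in>seqs n. pmf PV v)"
      by (rule final_alg)
    moreover have Kne: "?K \<noteq> 0" using Kpos by linarith
    ultimately show ?thesis by (simp only: add_divide_distrib) (simp add: Kne)
  qed
  finally have main: "avg_err n l PV W F q \<le> (\<Sum>v\<in>seqs n. pmf PV v * (\<Sum>u\<in>seqs l.
      measure_pmf.expectation (W (q v u)) (\<lambda>y. indicator Eset (v, q v u, y)))) / ?K
      + ?e * (\<Sum>v\<in>seqs n. pmf PV v)" .
  have s1: "(\<Sum>v\<in>seqs n. pmf PV v) = 1" by (rule sum_pmf_eq_1) (use PVsub in auto)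
  have s2: "measure_pmf.prob (joint_VXY l PV W q) Eset = (\<Sum>v\<in>seqs n. pmf PV v * (\<Sum>u\<in>seqs l.
      measure_pmf.expectation (W (q v u)) (\<lambda>y. indicator Eset (v, q v u, y)))) / ?K"
    unfolding prob_as_exp by (rule joint_exp[where B=1 and h="indicator Eset" and N="seqs n"]) (use PVsub in \<open>auto simp: indicator_def\<close>)
  have "avg_err n l PV W F q \<le> measure_pmf.prob (joint_VXY l PV W q) Eset + ?e"
    using main unfolding s1 s2 by simp
  then show ?thesis unfolding Eset_def .
qed

end
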